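(* Consider the cache-aided combination network described in the context, with parameters $h>r\ge 1$, $K=\binom{h}{r}\le D$, $\hat K=\binom{h-1}{r-1}$, and relay cache size $N$ with $0\le N\le \frac{D}{r}$. Let $t_1\in\{0,1,\dots,\min(\hat K,\lfloor \hat K N/D\rfloor)\}$ and $t_2\in\{0,1,\dots,\hat K\}$, and let $$M=\frac{(t_1-t_2)Nr}{\hat K}+\frac{t_2 D}{\hat K}.$$ Then, with user cache size $M$ and relay cache size $N$, the rate pair $(R_1,R_2)$ with $$R_1=\frac{\hat K-t_2}{r(t_2+1)}\Big(1-\frac{Nr}{D}\Big),\qquad R_2=\frac{1}{r}\Big(1-\frac{M}{D}\Big)$$ is achievable; i.e., the minimal achievable normalized rates satisfy $R_1\le \frac{\hat K-t_2}{r(t_2+1)}(1-\frac{Nr}{D})$ and $R_2\le \frac1r(1-\frac MD)$. Furthermore, for fixed $N$, every point of the convex envelope of the set of triples $(M,R_1,R_2)$ obtained above is achievable (i.e., a convex combination of the listed memory values $M$ admits the corresponding convex combination of the listed rate pairs).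
   Context: Combination network: a server holds $D$ independent files $W_1,\dots,W_D$, each uniformly distributed over $F$ bits. There are $h$ relay nodes $\Gamma_1,\dots,\Gamma_h$ and $K=\binom{h}{r}$ end users ($r<h$); each end user is connected to a distinct set of $r$ relays (one user for each $r$-subset of relays), so each relay is connected to $\hat K=\binom{h-1}{r-1}=rK/h$ users. The server is connected to every relay. All links (server–relay and relay–user) are noiseless unicast links. Assume $K\le D$. Each end user has a cache of $MF$ bits and each relay a cache of $NF$ bits. Placement phase (before demands are known): the server fills relay $j$'s cache with $V_j$ and user $k$'s cache with $Z_k$, functions of the files, with $H(V_j)\le NF$, $H(Z_k)\le MF$. Delivery phase: each user $k$ requests file $W_{d_k}$, $\mathbf d=(d_1,\dots,d_K)\in\{1,\dots,D\}^K$ arbitrary; the server sends to each relay $\Gamma_i$ a signal $X_{i,\mathbf d}$ (a function of the files and $\mathbf d$) of $R_1F$ bits; relay $\Gamma_i$ sends to each connected user $k$ a signal $Y_{i,\mathbf d,k}$ (a function of $X_{i,\mathbf d}$, $V_i$, $\mathbf d$) of $R_2F$ bits; user $k$ forms an estimate $\hat W_{d_k}$ from $Z_k$, $\mathbf d$, and the $r$ signals it receives from its relays. A rate pair $(R_1,R_2)$ (normalized by $F$) is achievable for cache sizes $(M,N)$ if for every $\epsilon>0$ and all sufficiently large $F$ there exist such placement and delivery functions with $\max_{\mathbf d,k}P(\hat W_{d_k}\neq W_{d_k})<\epsilon$. *)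

theory Defs
  imports "HOL-Analysis.Analysis" "HOL-Library.FuncSet"
begin

text \<open>Relays are indexed 0..h-1; an end user is identified with its r-subset of relays.
 A file library is a map from file indices 1..D to bit strings of length F
 (value [] outside 1..D); it is uniformly distributed over all such libraries,
 which is the same as D independent files uniformly distributed over F bits.\<close>

definition users :: "nat \<Rightarrow> nat \<Rightarrow> nat set set" where
  "users h r = {A. A \<subseteq> {..<h} \<and> card A = r}"

definition libraries :: "nat \<Rightarrow> nat \<Rightarrow> (nat \<Rightarrow> bool list) set" where
  "libraries D F = {W. (\<forall>i\<in>{1..D}. length (W i) = F) \<and> (\<forall>i. i \<notin> {1..D} \<longrightarrow> W i = [])}"

definition demands :: "nat \<Rightarrow> nat \<Rightarrow> nat \<Rightarrow> (nat set \<Rightarrow> nat) set" where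
  "demands h r D = users h r \<rightarrow>\<^sub>E {1..D}"

definition unif_prob :: "'a set \<Rightarrow> ('a \<Rightarrow> bool) \<Rightarrow> real" where
  "unif_prob S P = real (card {x\<in>S. P x}) / real (card S)"

definition entropy_unif :: "'a set \<Rightarrow> ('a \<Rightarrow> 'b) \<Rightarrow> real" where
  "entropy_unif S f = (\<Sum>v\<in>f ` S. - unif_prob S (\<lambda>x. f x = v) * log 2 (unif_prob S (\<lambda>x. f x = v)))"

text \<open>A scheme for block length F:
  V j W      : cache content of relay j,
  Z k W      : cache content of user k,
  X i d W    : server-to-relay-i signal,
  Y i d k x v: signal from relay i to user k, given server signal x and relay cache v,
  G k d z y  : decoder of user k, given its cache z and the signals y i from its relays i \<in> k.\<close>
definition valid_scheme ::
  "nat \<Rightarrow> nat \<Rightarrow> nat \<Rightarrow> nat \<Rightarrow> real \<Rightarrow> real \<Rightarrow> real \<Rightarrow> real \<Rightarrow> real \<Rightarrow>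
   (nat \<Rightarrow> (nat \<Rightarrow> bool list) \<Rightarrow> bool list) \<Rightarrow>
   (nat set \<Rightarrow> (nat \<Rightarrow> bool list) \<Rightarrow> bool list) \<Rightarrow>
   (nat \<Rightarrow> (nat set \<Rightarrow> nat) \<Rightarrow> (nat \<Rightarrow> bool list) \<Rightarrow> bool list) \<Rightarrow>
   (nat \<Rightarrow> (nat set \<Rightarrow> nat) \<Rightarrow> nat set \<Rightarrow> bool list \<Rightarrow> bool list \<Rightarrow> bool list) \<Rightarrow>
   (nat set \<Rightarrow> (nat set \<Rightarrow> nat) \<Rightarrow> bool list \<Rightarrow> (nat \<Rightarrow> bool list) \<Rightarrow> bool list) \<Rightarrow> bool" where
  "valid_scheme h r D F M N R1 R2 \<epsilon> V Z X Y G \<longleftrightarrow>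
     (\<forall>j<h. entropy_unif (libraries D F) (V j) \<le> N * real F) \<and>
     (\<forall>k\<in>users h r. entropy_unif (libraries D F) (Z k) \<le> M * real F) \<and>
     (\<forall>d\<in>demands h r D. \<forall>i<h. \<forall>W\<in>libraries D F. real (length (X i d W)) \<le> R1 * real F) \<and>
     (\<forall>d\<in>demands h r D. \<forall>k\<in>users h r. \<forall>i\<in>k. \<forall>W\<in>libraries D F.
         real (length (Y i d k (X i d W) (V i W))) \<le> R2 * real F) \<and>
     (\<forall>d\<in>demands h r D. \<forall>k\<in>users h r.
         unif_prob (libraries D F)
           (\<lambda>W. G k d (Z k W) (\<lambda>i. if i \<in> k then Y i d k (X i d W) (V i W) else []) \<noteq> W (d k)) < \<epsilon>)"

definition achievable :: "nat \<Rightarrow> nat \<Rightarrow> nat \<Rightarrow> real \<Rightarrow> real \<Rightarrow> real \<Rightarrow> real \<Rightarrow> bool" where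
  "achievable h r D M N R1 R2 \<longleftrightarrow>
     (\<forall>\<epsilon>>0. \<exists>F0. \<forall>F\<ge>F0. \<exists>V Z X Y G. valid_scheme h r D F M N R1 R2 \<epsilon> V Z X Y G)"

end

theory Submission
  imports Defs "HOL-Computational_Algebra.Polynomial"
begin


lemma entropy_le_log_card:
  assumes fin: "finite S" and ne: "S \<noteq> {}"
  shows "entropy_unif S f \<le> log 2 (card (f ` S))"
proof -
  define n where "n = real (card S)"
  define c where "c v = real (card {x\<in>S. f x = v})" for v
  define m where "m = real (card (f ` S))"
  have n0: "n > 0" using fin ne by (simp add: n_def card_gt_0_iff)
  have cpos: "c v > 0" if "v \<in> f ` S" for v
    using that fin by (auto simp: c_def card_gt_0_iff)
  have m0: "m > 0" using fin ne by (simp add: m_def card_gt_0_iff)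
  have sumc: "(\<Sum>v\<in>f ` S. c v) = n"
  proof -
    have "card S = (\<Sum>v\<in>f ` S. card {x\<in>S. f x = v})"
      using sum.image_gen[OF fin, of "\<lambda>_. (1::nat)" f] by simp
    then show ?thesis by (simp add: c_def n_def)
  qed
  have up: "unif_prob S (\<lambda>x. f x = v) = c v / n" for v
    by (simp add: unif_prob_def c_def n_def)
  have "entropy_unif S f - log 2 m = (\<Sum>v\<in>f ` S. c v / n * log 2 (n / (c v * m)))"
  proof -
    have "(\<Sum>v\<in>f ` S. c v / n * log 2 (n / (c v * m))) =
          (\<Sum>v\<in>f ` S. - (c v / n) * log 2 (c v / n) - c v / n * log 2 m)"
    proof (rule sum.cong[OF refl])
      fix v assume v: "v \<in> f ` S"
      have "log 2 (n / (c v * m)) = - log 2 (c v / n) - log 2 m"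
        using cpos[OF v] n0 m0 by (simp add: log_divide log_mult)
      then show "c v / n * log 2 (n / (c v * m)) = - (c v / n) * log 2 (c v / n) - c v / n * log 2 m"
      proof -
        have "c v / n * log 2 (n / (c v * m)) = c v / n * (- log 2 (c v / n) - log 2 m)"
          using \<open>log 2 (n / (c v * m)) = - log 2 (c v / n) - log 2 m\<close> by simp
        then show ?thesis by (simp add: algebra_simps)
      qed
    qed
    also have "\<dots> = entropy_unif S f - (\<Sum>v\<in>f ` S. c v / n) * log 2 m"
      by (simp add: entropy_unif_def up sum_subtractf sum_distrib_right)
    also have "(\<Sum>v\<in>f ` S. c v / n) = 1"
      using sumc n0 by (simp add: sum_divide_distrib[symmetric])
    finally show ?thesis by simp
  qed
  also have "\<dots> \<le> (\<Sum>v\<in>f ` S. c v / n * ((n / (c v * m) - 1) / ln 2))"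
  proof (rule sum_mono)
    fix v assume v: "v \<in> f ` S"
    have pos: "n / (c v * m) > 0" using cpos[OF v] n0 m0 by simp
    have "log 2 (n / (c v * m)) = ln (n / (c v * m)) / ln 2" by (simp add: log_def)
    also have "\<dots> \<le> (n / (c v * m) - 1) / ln 2"
      using ln_le_minus_one[OF pos] by (simp add: divide_right_mono)
    finally show "c v / n * log 2 (n / (c v * m)) \<le> c v / n * ((n / (c v * m) - 1) / ln 2)"
      using cpos[OF v] n0 by (intro mult_left_mono) auto
  qed
  also have "\<dots> = (\<Sum>v\<in>f ` S. (1 / m - c v / n)) / ln 2"
  proof -
    have "c v / n * ((n / (c v * m) - 1) / ln 2) = (1 / m - c v / n) / ln 2" if "v \<in> f ` S" for v
      using cpos[OF that] n0 m0 by (simp add: field_simps)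
    then show ?thesis by (simp add: sum_divide_distrib)
  qed
  also have "(\<Sum>v\<in>f ` S. (1 / m - c v / n)) = 0"
  proof -
    have "(\<Sum>v\<in>f ` S. (1 / m - c v / n)) = card (f ` S) * (1/m) - (\<Sum>v\<in>f ` S. c v) / n"
      by (simp add: sum_subtractf sum_divide_distrib)
    also have "\<dots> = 0" using m0 n0 sumc by (simp add: m_def)
    finally show ?thesis .
  qed
  finally show ?thesis by (simp add: m_def)
qed



lemma lib_finite: "finite (libraries D F)"
proof -
  let ?P = "PiE {1..D} (\<lambda>_. {xs::bool list. set xs \<subseteq> UNIV \<and> length xs = F})"
  have fin: "finite ?P" by (intro finite_PiE) (use finite_lists_length_eq[of "UNIV::bool set" F] in auto)
  have inj: "inj_on (\<lambda>W. restrict W {1..D}) (libraries D F)"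
  proof (rule inj_onI)
    fix W W' assume W: "W \<in> libraries D F" and W': "W' \<in> libraries D F"
      and eq: "restrict W {1..D} = restrict W' {1..D}"
    show "W = W'"
    proof
      fix i show "W i = W' i"
      proof (cases "i \<in> {1..D}")
        case True then show ?thesis using fun_cong[OF eq, of i] by simp
      next
        case False then show ?thesis using W W' by (auto simp: libraries_def)
      qed
    qed
  qed
  have "(\<lambda>W. restrict W {1..D}) ` libraries D F \<subseteq> ?P"
    by (auto simp: libraries_def)
  then have "finite ((\<lambda>W. restrict W {1..D}) ` libraries D F)" using fin finite_subset by blast
  then show ?thesis using finite_imageD[OF _ inj] by blast
qed

lemma lib_nonempty: "libraries D F \<noteq> {}"
proof -
  have "(\<lambda>i. if i \<in> {1..D} then replicate F False else []) \<in> libraries D F"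
    by (auto simp: libraries_def)
  then show ?thesis by blast
qed

lemma enc_exists:
  assumes "finite A" "card A \<le> 2 ^ L"
  shows "\<exists>e. inj_on e A \<and> (\<forall>a\<in>A. length (e a :: bool list) = L)"
proof -
  let ?B = "{xs::bool list. set xs \<subseteq> UNIV \<and> length xs = L}"
  have "card ?B = 2 ^ L" using card_lists_length_eq[of "UNIV::bool set" L] by simp
  moreover have "finite ?B" by (rule finite_lists_length_eq) simp
  ultimately obtain e where "e ` A \<subseteq> ?B" "inj_on e A"
    using card_le_inj[OF assms(1), of ?B] assms(2) by auto
  then show ?thesis by auto
qed

lemma entropy_le_L:
  assumes "card (g ` libraries D F) \<le> 2 ^ L"
    and "inj_on e (g ` libraries D F)"
  shows "entropy_unif (libraries D F) (\<lambda>W. e (g W)) \<le> real L"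
proof -
  let ?S = "libraries D F"
  have "entropy_unif ?S (\<lambda>W. e (g W)) \<le> log 2 (card ((\<lambda>W. e (g W)) ` ?S))"
    by (rule entropy_le_log_card[OF lib_finite lib_nonempty])
  also have "(\<lambda>W. e (g W)) ` ?S = e ` (g ` ?S)" by auto
  also have "card (e ` (g ` ?S)) = card (g ` ?S)" using assms(2) by (simp add: card_image)
  also have "log 2 (card (g ` ?S)) \<le> log 2 (2 ^ L)"
  proof -
    have "card (g ` ?S) > 0" using lib_finite lib_nonempty by (simp add: card_gt_0_iff)
    moreover have "real (card (g ` ?S)) \<le> real (2 ^ L)" using assms(1)
      by (simp only: of_nat_le_iff)
    ultimately show ?thesis by (intro log_mono) auto
  qed
  also have "log 2 (2 ^ L) = real L" by (simp add: log_nat_power)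
  finally show ?thesis .
qed

lemma users_sub: "k \<in> users h r \<Longrightarrow> i \<in> k \<Longrightarrow> i < h"
  by (auto simp: users_def)

lemma reduce:
  fixes V' :: "nat \<Rightarrow> (nat \<Rightarrow> bool list) \<Rightarrow> 'v"
    and Z' :: "nat set \<Rightarrow> (nat \<Rightarrow> bool list) \<Rightarrow> 'z"
    and X' :: "nat \<Rightarrow> (nat set \<Rightarrow> nat) \<Rightarrow> (nat \<Rightarrow> bool list) \<Rightarrow> 'x"
    and Y' :: "nat \<Rightarrow> (nat set \<Rightarrow> nat) \<Rightarrow> nat set \<Rightarrow> (nat \<Rightarrow> bool list) \<Rightarrow> 'y"
    and \<phi> :: "nat \<Rightarrow> (nat set \<Rightarrow> nat) \<Rightarrow> nat set \<Rightarrow> 'x \<Rightarrow> 'v \<Rightarrow> 'y"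
  assumes eps: "\<epsilon> > 0"
    and V1: "\<forall>j<h. card (V' j ` libraries D F) \<le> 2 ^ LV" and V2: "real LV \<le> N * real F"
    and Z1: "\<forall>k\<in>users h r. card (Z' k ` libraries D F) \<le> 2 ^ LZ" and Z2: "real LZ \<le> M * real F"
    and X1: "\<forall>d\<in>demands h r D. \<forall>i<h. card (X' i d ` libraries D F) \<le> 2 ^ LX"
    and X2: "real LX \<le> R1 * real F"
    and Y1: "\<forall>d\<in>demands h r D. \<forall>k\<in>users h r. \<forall>i\<in>k. card (Y' i d k ` libraries D F) \<le> 2 ^ LY"
    and Y2: "real LY \<le> R2 * real F"
    and phi: "\<And>d i k W. Y' i d k W = \<phi> i d k (X' i d W) (V' i W)"
    and det: "\<And>d k W W'. d \<in> demands h r D \<Longrightarrow> k \<in> users h r \<Longrightarrow> W \<in> libraries D F \<Longrightarrow>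
        W' \<in> libraries D F \<Longrightarrow> Z' k W = Z' k W' \<Longrightarrow> (\<forall>i\<in>k. Y' i d k W = Y' i d k W') \<Longrightarrow>
        W (d k) = W' (d k)"
  shows "\<exists>V Z X Y G. valid_scheme h r D F M N R1 R2 \<epsilon> V Z X Y G"
proof -
  let ?S = "libraries D F"
  have fS: "finite ?S" by (rule lib_finite)
  define eV where "eV j = (SOME e. inj_on e (V' j ` ?S) \<and> (\<forall>a\<in>V' j ` ?S. length (e a :: bool list) = LV))" for j
  define eZ where "eZ k = (SOME e. inj_on e (Z' k ` ?S) \<and> (\<forall>a\<in>Z' k ` ?S. length (e a :: bool list) = LZ))" for k
  define eX where "eX i d = (SOME e. inj_on e (X' i d ` ?S) \<and> (\<forall>a\<in>X' i d ` ?S. length (e a :: bool list) = LX))" for i d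
  define eY where "eY i d k = (SOME e. inj_on e (Y' i d k ` ?S) \<and> (\<forall>a\<in>Y' i d k ` ?S. length (e a :: bool list) = LY))" for i d k
  have eV: "inj_on (eV j) (V' j ` ?S) \<and> (\<forall>a\<in>V' j ` ?S. length (eV j a) = LV)" if "j < h" for j
  proof -
    have "\<exists>e. inj_on e (V' j ` ?S) \<and> (\<forall>a\<in>V' j ` ?S. length (e a :: bool list) = LV)" by (rule enc_exists) (use fS V1 that in \<open>auto intro: finite_imageI\<close>)
    from someI_ex[OF this] show ?thesis unfolding eV_def .
  qed
  have eZ: "inj_on (eZ k) (Z' k ` ?S) \<and> (\<forall>a\<in>Z' k ` ?S. length (eZ k a) = LZ)" if "k \<in> users h r" for k
  proof -
    have "\<exists>e. inj_on e (Z' k ` ?S) \<and> (\<forall>a\<in>Z' k ` ?S. length (e a :: bool list) = LZ)" by (rule enc_exists) (use fS Z1 that in \<open>auto intro: finite_imageI\<close>)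
    from someI_ex[OF this] show ?thesis unfolding eZ_def .
  qed
  have eX: "inj_on (eX i d) (X' i d ` ?S) \<and> (\<forall>a\<in>X' i d ` ?S. length (eX i d a) = LX)"
    if "d \<in> demands h r D" "i < h" for i d
  proof -
    have "\<exists>e. inj_on e (X' i d ` ?S) \<and> (\<forall>a\<in>X' i d ` ?S. length (e a :: bool list) = LX)" by (rule enc_exists) (use fS X1 that in \<open>auto intro: finite_imageI\<close>)
    from someI_ex[OF this] show ?thesis unfolding eX_def .
  qed
  have eY: "inj_on (eY i d k) (Y' i d k ` ?S) \<and> (\<forall>a\<in>Y' i d k ` ?S. length (eY i d k a) = LY)"
    if "d \<in> demands h r D" "k \<in> users h r" "i \<in> k" for i d k
  proof -
    have "\<exists>e. inj_on e (Y' i d k ` ?S) \<and> (\<forall>a\<in>Y' i d k ` ?S. length (e a :: bool list) = LY)" by (rule enc_exists) (use fS Y1 that in \<open>auto intro: finite_imageI\<close>)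
    from someI_ex[OF this] show ?thesis unfolding eY_def .
  qed
  define V where "V j W = eV j (V' j W)" for j W
  define Z where "Z k W = eZ k (Z' k W)" for k W
  define X where "X i d W = eX i d (X' i d W)" for i d W
  define Y where "Y i d k x v = eY i d k (\<phi> i d k (inv_into (X' i d ` ?S) (eX i d) x) (inv_into (V' i ` ?S) (eV i) v))"
    for i d k x v
  define sig where "sig k d W = (\<lambda>i. if i \<in> k then Y i d k (X i d W) (V i W) else [])" for k d W
  define G where "G k d z y = (SOME w. \<exists>W\<in>?S. Z k W = z \<and> sig k d W = y \<and> w = W (d k))" for k d z y
  have Yeq: "Y i d k (X i d W) (V i W) = eY i d k (Y' i d k W)"
    if "d \<in> demands h r D" "i < h" "W \<in> ?S" for i d k W
  proof -
    have "inv_into (X' i d ` ?S) (eX i d) (eX i d (X' i d W)) = X' i d W"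
      using eX[OF that(1,2)] that(3) by (intro inv_into_f_f) auto
    moreover have "inv_into (V' i ` ?S) (eV i) (eV i (V' i W)) = V' i W"
      using eV[OF that(2)] that(3) by (intro inv_into_f_f) auto
    ultimately show ?thesis by (simp add: Y_def X_def V_def phi)
  qed
  have correct: "G k d (Z k W) (sig k d W) = W (d k)"
    if d: "d \<in> demands h r D" and k: "k \<in> users h r" and W: "W \<in> ?S" for d k W
  proof -
    have "\<exists>w. \<exists>W'\<in>?S. Z k W' = Z k W \<and> sig k d W' = sig k d W \<and> w = W' (d k)" using W by blast
    then have "\<exists>W'\<in>?S. Z k W' = Z k W \<and> sig k d W' = sig k d W \<and> G k d (Z k W) (sig k d W) = W' (d k)"
      unfolding G_def by (rule someI_ex)
    then obtain W' where W': "W' \<in> ?S" and z: "Z k W' = Z k W" and s: "sig k d W' = sig k d W"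
      and g: "G k d (Z k W) (sig k d W) = W' (d k)" by blast
    have "Z' k W' = Z' k W" using z eZ[OF k] W W' by (auto simp: Z_def inj_on_def)
    moreover have "\<forall>i\<in>k. Y' i d k W' = Y' i d k W"
    proof
      fix i assume i: "i \<in> k"
      have ih: "i < h" using users_sub[OF k i] .
      have "Y i d k (X i d W') (V i W') = Y i d k (X i d W) (V i W)"
        using fun_cong[OF s, of i] i by (simp add: sig_def)
      then have "eY i d k (Y' i d k W') = eY i d k (Y' i d k W)" using Yeq[OF d ih] W W' by simp
      then show "Y' i d k W' = Y' i d k W" using eY[OF d k i] W W' by (auto simp: inj_on_def)
    qed
    ultimately have "W' (d k) = W (d k)" using det[OF d k W' W] by blast
    then show ?thesis using g by simp
  qed
  have "valid_scheme h r D F M N R1 R2 \<epsilon> V Z X Y G"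
    unfolding valid_scheme_def
  proof (intro conjI ballI allI impI)
    fix j assume j: "j < h"
    show "entropy_unif ?S (V j) \<le> N * real F"
      using entropy_le_L[where g="V' j" and L=LV and D=D and F=F and e="eV j"] V1 j eV[OF j] V2 unfolding V_def by fastforce
  next
    fix k assume k: "k \<in> users h r"
    show "entropy_unif ?S (Z k) \<le> M * real F"
      using entropy_le_L[where g="Z' k" and L=LZ and D=D and F=F and e="eZ k"] Z1 k eZ[OF k] Z2 unfolding Z_def by fastforce
  next
    fix d i W assume d: "d \<in> demands h r D" and i: "i < h" and W: "W \<in> ?S"
    show "real (length (X i d W)) \<le> R1 * real F" using eX[OF d i] W X2 by (simp add: X_def)
  next
    fix d k i W assume d: "d \<in> demands h r D" and k: "k \<in> users h r" and i: "i \<in> k" and W: "W \<in> ?S"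
    show "real (length (Y i d k (X i d W) (V i W))) \<le> R2 * real F"
      using Yeq[OF d users_sub[OF k i] W] eY[OF d k i] W Y2 by simp
  next
    fix d k assume d: "d \<in> demands h r D" and k: "k \<in> users h r"
    have E: "{W \<in> ?S. G k d (Z k W) (\<lambda>i. if i \<in> k then Y i d k (X i d W) (V i W) else []) \<noteq> W (d k)} = {}"
      using correct[OF d k] by (auto simp: sig_def)
    then show "unif_prob ?S (\<lambda>W. G k d (Z k W) (\<lambda>i. if i \<in> k then Y i d k (X i d W) (V i W) else []) \<noteq> W (d k)) < \<epsilon>"
      unfolding unif_prob_def E using eps by simp
  qed
  then show ?thesis by blast
qed



definition cb :: "nat \<Rightarrow> nat \<Rightarrow> (nat \<Rightarrow> bool list) \<Rightarrow> nat \<Rightarrow> nat \<Rightarrow> nat \<Rightarrow> bool" where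
  "cb F B W n j q = (j * B + q < F \<and> W n ! (j * B + q))"

definition cv :: "nat \<Rightarrow> nat \<Rightarrow> (nat \<Rightarrow> bool list) \<Rightarrow> nat \<Rightarrow> nat \<Rightarrow> nat" where
  "cv F B W n j = (\<Sum>q<B. if cb F B W n j q then 2 ^ q else 0)"

definition pv :: "nat \<Rightarrow> nat \<Rightarrow> nat \<Rightarrow> (nat \<Rightarrow> bool list) \<Rightarrow> nat \<Rightarrow> nat \<Rightarrow> nat" where
  "pv r F B W n i = (\<Sum>j<r. cv F B W n j * i ^ j)"

definition pb :: "nat \<Rightarrow> nat \<Rightarrow> nat \<Rightarrow> (nat \<Rightarrow> bool list) \<Rightarrow> nat \<Rightarrow> nat \<Rightarrow> nat \<Rightarrow> bool" where
  "pb r F B W n i q = odd (pv r F B W n i div 2 ^ q)"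

lemma sum_bits_lt: "(\<Sum>q<B. if b q then 2 ^ q else 0::nat) < 2 ^ B"
proof (induction B)
  case 0 then show ?case by simp
next
  case (Suc B) then show ?case by (auto simp: split: if_splits)
qed

lemma sum_bits_inj:
  "(\<Sum>q<B. if b q then 2 ^ q else 0::nat) = (\<Sum>q<B. if b' q then 2 ^ q else 0) \<Longrightarrow> \<forall>q<B. b q = b' q"
proof (induction B)
  case 0 then show ?case by simp
next
  case (Suc B)
  have l1: "(\<Sum>q<B. if b q then 2 ^ q else 0::nat) < 2 ^ B" by (rule sum_bits_lt)
  have l2: "(\<Sum>q<B. if b' q then 2 ^ q else 0::nat) < 2 ^ B" by (rule sum_bits_lt)
  have eq: "(\<Sum>q<B. if b q then 2 ^ q else 0::nat) + (if b B then 2 ^ B else 0)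
     = (\<Sum>q<B. if b' q then 2 ^ q else 0) + (if b' B then 2 ^ B else 0)"
    using Suc.prems by simp
  have bB: "b B = b' B"
  proof (rule ccontr)
    assume "b B \<noteq> b' B"
    then show False using eq l1 l2 by (cases "b B") auto
  qed
  then have "(\<Sum>q<B. if b q then 2 ^ q else 0::nat) = (\<Sum>q<B. if b' q then 2 ^ q else 0)"
    using eq by simp
  then have "\<forall>q<B. b q = b' q" by (rule Suc.IH)
  then show ?case using bB less_Suc_eq by auto
qed

lemma bits_det:
  "(v::nat) < 2 ^ S \<Longrightarrow> v' < 2 ^ S \<Longrightarrow> (\<forall>q<S. odd (v div 2 ^ q) = odd (v' div 2 ^ q)) \<Longrightarrow> v = v'"
proof (induction S arbitrary: v v')
  case 0 then show ?case by simp
next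
  case (Suc S)
  have m: "v mod 2 = v' mod 2" using Suc.prems(3) by (auto simp: odd_iff_mod_2_eq_one)
  have "v div 2 < 2 ^ S" "v' div 2 < 2 ^ S" using Suc.prems(1,2) by auto
  moreover have "\<forall>q<S. odd (v div 2 div 2 ^ q) = odd (v' div 2 div 2 ^ q)"
    using Suc.prems(3) by (auto simp: div_mult2_eq[symmetric])
  ultimately have "v div 2 = v' div 2" by (rule Suc.IH)
  then show ?case using m by (metis div_mult_mod_eq)
qed

lemma pv_lt:
  fixes h :: nat
  assumes "i < h"
  shows "pv r F B W n i < 2 ^ (B + r + h * r)"
proof -
  have t: "cv F B W n j * i ^ j \<le> 2 ^ B * h ^ r" if "j < r" for j
  proof -
    have "cv F B W n j \<le> 2 ^ B" using sum_bits_lt unfolding cv_def by (metis less_imp_le)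
    moreover have "i ^ j \<le> h ^ r"
    proof -
      have "i ^ j \<le> h ^ j" using assms by (simp add: power_mono)
      also have "\<dots> \<le> h ^ r" using assms that by (intro power_increasing) auto
      finally show ?thesis .
    qed
    ultimately show ?thesis by (rule mult_mono) auto
  qed
  have "pv r F B W n i \<le> (\<Sum>j<r. 2 ^ B * h ^ r)" unfolding pv_def by (rule sum_mono) (use t in auto)
  also have "\<dots> = r * (2 ^ B * h ^ r)" by simp
  also have "\<dots> < 2 ^ r * (2 ^ B * 2 ^ (h * r))"
  proof -
    have "h ^ r \<le> (2 ^ h) ^ r" by (rule power_mono) (auto simp: less_imp_le)
    then have "h ^ r \<le> 2 ^ (h * r)" by (simp add: power_mult)
    moreover have "r < 2 ^ r" by simp
    ultimately show ?thesis using assms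
      by (intro mult_less_le_imp_less mult_left_mono) auto
  qed
  also have "\<dots> = 2 ^ (B + r + h * r)" by (simp add: power_add)
  finally show ?thesis .
qed

lemma mds:
  assumes k: "k \<subseteq> {..<h}" "card k = r"
    and eq: "\<forall>i\<in>k. pv r F B W n i = pv r F B W' n i"
  shows "\<forall>j<r. cv F B W n j = cv F B W' n j"
proof -
  define a where "a j = int (cv F B W n j) - int (cv F B W' n j)" for j
  define p :: "int poly" where "p = (\<Sum>j<r. monom (a j) j)"
  have pe: "poly p x = (\<Sum>j<r. a j * x ^ j)" for x
    by (simp add: p_def poly_sum poly_monom)
  have roots: "int ` k \<subseteq> {x. poly p x = 0}"
  proof
    fix x assume "x \<in> int ` k"
    then obtain i where i: "i \<in> k" "x = int i" by auto
    have "poly p x = (\<Sum>j<r. int (cv F B W n j) * x ^ j) - (\<Sum>j<r. int (cv F B W' n j) * x ^ j)"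
      by (simp add: pe a_def sum_subtractf left_diff_distrib)
    also have "\<dots> = int (pv r F B W n i) - int (pv r F B W' n i)"
      by (simp add: pv_def i(2))
    also have "\<dots> = 0" using eq i(1) by simp
    finally show "x \<in> {x. poly p x = 0}" by simp
  qed
  have p0: "p = 0"
  proof (rule ccontr)
    assume pn: "p \<noteq> 0"
    have "card (int ` k) \<le> card {x. poly p x = 0}"
      by (rule card_mono[OF poly_roots_finite[OF pn] roots])
    also have "\<dots> \<le> degree p" by (rule card_poly_roots_bound[OF pn])
    finally have c: "r \<le> degree p" using k by (simp add: card_image)
    have "degree p \<le> r - 1" unfolding p_def
      by (rule degree_sum_le) (auto intro: order.trans[OF degree_monom_le])
    moreover have "r > 0"
    proof (rule ccontr)
      assume "\<not> r > 0" then have "p = 0" by (simp add: p_def)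
      then show False using pn by simp
    qed
    ultimately show False using c by simp
  qed
  show ?thesis
  proof (intro allI impI)
    fix j assume j: "j < r"
    have "coeff p j = (\<Sum>j'<r. if j' = j then a j' else 0)"
      by (simp add: p_def coeff_sum coeff_monom)
    also have "\<dots> = a j" using j by simp
    finally have "a j = 0" using p0 by simp
    then show "cv F B W n j = cv F B W' n j" by (simp add: a_def)
  qed
qed

lemma file_det:
  assumes W: "W \<in> libraries D F" and W': "W' \<in> libraries D F" and n: "n \<in> {1..D}"
    and FB: "F \<le> r * B"
    and k: "k \<subseteq> {..<h}" "card k = r"
    and eq: "\<forall>i\<in>k. \<forall>q < B + r + h * r. pb r F B W n i q = pb r F B W' n i q"
  shows "W n = W' n"
proof -
  have "\<forall>i\<in>k. pv r F B W n i = pv r F B W' n i"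
  proof
    fix i assume i: "i \<in> k"
    have ih: "i < h" using k i by auto
    show "pv r F B W n i = pv r F B W' n i"
      by (rule bits_det[OF pv_lt[OF ih] pv_lt[OF ih]]) (use eq i in \<open>simp add: pb_def\<close>)
  qed
  then have cveq: "\<forall>j<r. cv F B W n j = cv F B W' n j" by (rule mds[OF k])
  have len: "length (W n) = F" "length (W' n) = F" using W W' n by (auto simp: libraries_def)
  show ?thesis
  proof (rule nth_equalityI)
    show "length (W n) = length (W' n)" using len by simp
  next
    fix p assume p: "p < length (W n)"
    then have pF: "p < F" using len by simp
    have B0: "B > 0" using FB pF by (cases B) auto
    define j where "j = p div B"
    define q where "q = p mod B"
    have pj: "p = j * B + q" by (simp add: j_def q_def)
    have qB: "q < B" using B0 by (simp add: q_def)
    have jr: "j < r"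
    proof (rule ccontr)
      assume "\<not> j < r"
      then have "r * B \<le> j * B" by simp
      then show False using pj FB pF by linarith
    qed
    have "\<forall>q<B. cb F B W n j q = cb F B W' n j q"
      by (rule sum_bits_inj) (use cveq jr in \<open>simp add: cv_def\<close>)
    then have "cb F B W n j q = cb F B W' n j q" using qB by blast
    then show "W n ! p = W' n ! p" using pF by (simp add: cb_def pj)
  qed
qed



lemma pow_sum:
  fixes f :: "nat \<Rightarrow> real"
  assumes U: "finite U"
  shows "(\<Sum>T\<in>Pow U. f (card T)) = (\<Sum>t\<le>card U. real (card U choose t) * f t)"
proof -
  have P: "Pow U = (\<Union>t\<in>{..card U}. {T. T \<subseteq> U \<and> card T = t})"
    using U by (auto intro: card_mono)
  have "(\<Sum>T\<in>Pow U. f (card T)) = (\<Sum>t\<le>card U. (\<Sum>T\<in>{T. T \<subseteq> U \<and> card T = t}. f (card T)))"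
    unfolding P
    by (rule sum.UNION_disjoint) (use U in \<open>auto intro: finite_subset[of _ "Pow U"]\<close>)
  also have "\<dots> = (\<Sum>t\<le>card U. real (card U choose t) * f t)"
  proof (rule sum.cong[OF refl])
    fix t
    have "(\<Sum>T\<in>{T. T \<subseteq> U \<and> card T = t}. f (card T)) = (\<Sum>T\<in>{T. T \<subseteq> U \<and> card T = t}. f t)"
      by (rule sum.cong) auto
    also have "\<dots> = real (card {T. T \<subseteq> U \<and> card T = t}) * f t" by simp
    also have "\<dots> = real (card U choose t) * f t" using n_subsets[OF U] by simp
    finally show "(\<Sum>T\<in>{T. T \<subseteq> U \<and> card T = t}. f (card T)) = real (card U choose t) * f t" .
  qed
  finally show ?thesis .
qed

lemma pow_sum_in:
  fixes f :: "nat \<Rightarrow> real"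
  assumes U: "finite U" and k: "k \<in> U"
  shows "(\<Sum>T\<in>{T\<in>Pow U. k \<in> T}. f (card T)) =
         (\<Sum>t\<le>card U. real (card U choose t) * real t / real (card U) * f t)"
proof -
  define K where "K = card U"
  have K1: "K = Suc (K - 1)" proof -
    have "card U > 0" using U k card_gt_0_iff by blast
    then show ?thesis by (simp add: K_def)
  qed
  have cU: "card (U - {k}) = K - 1" using U k by (simp add: K_def)
  have img: "{T\<in>Pow U. k \<in> T} = insert k ` Pow (U - {k})" 
  proof
    show "{T\<in>Pow U. k \<in> T} \<subseteq> insert k ` Pow (U - {k})"
    proof
      fix T assume "T \<in> {T\<in>Pow U. k \<in> T}"
      then have "T = insert k (T - {k})" "T - {k} \<in> Pow (U - {k})" by auto
      then show "T \<in> insert k ` Pow (U - {k})" by blast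
    qed
  qed (use k in auto)
  have inj: "inj_on (insert k) (Pow (U - {k}))"
    by (rule inj_onI) (metis Diff_insert_absorb PowD subset_Diff_insert)
  have "(\<Sum>T\<in>{T\<in>Pow U. k \<in> T}. f (card T)) = (\<Sum>T\<in>Pow (U - {k}). f (card (insert k T)))"
    unfolding img by (simp add: sum.reindex[OF inj])
  also have "\<dots> = (\<Sum>T\<in>Pow (U - {k}). f (card T + 1))"
  proof (rule sum.cong[OF refl])
    fix T assume "T \<in> Pow (U - {k})"
    then have "finite T" "k \<notin> T" using U by (auto intro: finite_subset)
    then show "f (card (insert k T)) = f (card T + 1)" by simp
  qed
  also have "\<dots> = (\<Sum>s\<le>K - 1. real ((K - 1) choose s) * f (s + 1))"
    using pow_sum[of "U - {k}" "\<lambda>t. f (t + 1)"] U cU by simp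
  also have "\<dots> = (\<Sum>t\<le>K. real (K choose t) * real t / real K * f t)"
  proof -
    have "(\<Sum>t\<le>K. real (K choose t) * real t / real K * f t)
        = (\<Sum>t\<le>Suc (K - 1). real (K choose t) * real t / real K * f t)" using K1 by simp
    also have "\<dots> = (\<Sum>s\<le>K - 1. real (K choose Suc s) * real (Suc s) / real K * f (Suc s))"
      by (subst sum.atMost_Suc_shift) simp
    also have "\<dots> = (\<Sum>s\<le>K - 1. real ((K - 1) choose s) * f (s + 1))"
    proof (rule sum.cong[OF refl])
      fix s
      have "Suc s * (K choose Suc s) = K * ((K - 1) choose s)" by (rule binomial_absorption)
      then have "real (K choose Suc s) * real (Suc s) = real K * real ((K - 1) choose s)"
        by (metis of_nat_mult mult.commute)
      moreover have "real K > 0" using K1 by linarith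
      ultimately show "real (K choose Suc s) * real (Suc s) / real K * f (Suc s) = real ((K - 1) choose s) * f (s + 1)"
        by (simp add: field_simps)
    qed
    finally show ?thesis by simp
  qed
  finally show ?thesis by (simp add: K_def)
qed

lemma pow_sum_notin:
  fixes f :: "nat \<Rightarrow> real"
  assumes U: "finite U" and k: "k \<in> U"
  shows "(\<Sum>T\<in>Pow (U - {k}). f (card T)) =
         (\<Sum>t\<le>card U. real (card U choose t) * (real (card U) - real t) / real (card U) * f t)"
proof -
  define K where "K = card U"
  have K1: "K = Suc (K - 1)" proof -
    have "card U > 0" using U k card_gt_0_iff by blast
    then show ?thesis by (simp add: K_def)
  qed
  have cU: "card (U - {k}) = K - 1" using U k by (simp add: K_def)
  have "(\<Sum>T\<in>Pow (U - {k}). f (card T)) = (\<Sum>t\<le>K - 1. real ((K - 1) choose t) * f t)"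
    using pow_sum[of "U - {k}" f] U cU by simp
  also have "\<dots> = (\<Sum>t\<le>K. real (K choose t) * (real K - real t) / real K * f t)"
  proof -
    have "(\<Sum>t\<le>K. real (K choose t) * (real K - real t) / real K * f t)
        = (\<Sum>t\<le>Suc (K - 1). real (K choose t) * (real K - real t) / real K * f t)" using K1 by simp
    also have "\<dots> = (\<Sum>t\<le>K - 1. real (K choose t) * (real K - real t) / real K * f t)"
      using K1 by (subst sum.atMost_Suc) simp
    also have "\<dots> = (\<Sum>t\<le>K - 1. real ((K - 1) choose t) * f t)"
    proof (rule sum.cong[OF refl])
      fix t assume t: "t \<in> {..K - 1}"
      have "(K - t) * (K choose t) = K * ((K - 1) choose t)" by (rule binomial_absorb_comp)
      then have "real (K choose t) * (real K - real t) = real K * real ((K - 1) choose t)"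
        using t K1 by (metis of_nat_diff of_nat_mult mult.commute atMost_iff le_SucI)
      moreover have "real K > 0" using K1 by linarith
      ultimately show "real (K choose t) * (real K - real t) / real K * f t = real ((K - 1) choose t) * f t"
        by (simp add: field_simps)
    qed
    finally show ?thesis by simp
  qed
  finally show ?thesis by (simp add: K_def)
qed

lemma pow_sum_ne:
  fixes f :: "nat \<Rightarrow> real"
  assumes U: "finite U" and K1: "card U \<ge> 1"
  shows "(\<Sum>T\<in>Pow U - {{}}. f (card T - 1)) =
         (\<Sum>t\<le>card U. real (card U choose t) * (real (card U) - real t) / (real t + 1) * f t)"
proof -
  define K where "K = card U"
  define g where "g t = (if t = 0 then 0 else f (t - 1))" for t
  have KS: "K = Suc (K - 1)" using K1 by (simp add: K_def)
  have "(\<Sum>T\<in>Pow U - {{}}. f (card T - 1)) = (\<Sum>T\<in>Pow U - {{}}. g (card T))"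
    by (rule sum.cong[OF refl]) (metis DiffE PowD U card_0_eq finite_subset g_def insertCI)
  also have "\<dots> = (\<Sum>T\<in>Pow U. g (card T))"
    by (rule sum.mono_neutral_left) (use U in \<open>auto simp: g_def\<close>)
  also have "\<dots> = (\<Sum>t\<le>K. real (K choose t) * g t)" using pow_sum[OF U, of g] by (simp add: K_def)
  also have "\<dots> = (\<Sum>s\<le>K - 1. real (K choose Suc s) * f s)"
    using KS by (metis (no_types, lifting) sum.atMost_Suc_shift diff_Suc_1 g_def mult_zero_right add_0 nat.simps(3) sum.cong)
  also have "\<dots> = (\<Sum>t\<le>K. real (K choose t) * (real K - real t) / (real t + 1) * f t)"
  proof -
    have "(\<Sum>t\<le>K. real (K choose t) * (real K - real t) / (real t + 1) * f t)
        = (\<Sum>t\<le>Suc (K - 1). real (K choose t) * (real K - real t) / (real t + 1) * f t)" using KS by simp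
    also have "\<dots> = (\<Sum>t\<le>K - 1. real (K choose t) * (real K - real t) / (real t + 1) * f t)"
      using KS by (subst sum.atMost_Suc) simp
    also have "\<dots> = (\<Sum>s\<le>K - 1. real (K choose Suc s) * f s)"
    proof (rule sum.cong[OF refl])
      fix t assume t: "t \<in> {..K - 1}"
      have a1: "Suc t * (K choose Suc t) = K * ((K - 1) choose t)" by (rule binomial_absorption)
      have a2: "(K - t) * (K choose t) = K * ((K - 1) choose t)" by (rule binomial_absorb_comp)
      have "real (Suc t) * real (K choose Suc t) = (real K - real t) * real (K choose t)"
        using a1 a2 t KS by (metis of_nat_diff of_nat_mult atMost_iff le_SucI)
      then have "real (K choose Suc t) = (real K - real t) * real (K choose t) / real (Suc t)"
        by (simp add: eq_divide_eq mult.commute)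
      then show "real (K choose t) * (real K - real t) / (real t + 1) * f t = real (K choose Suc t) * f t"
        by (simp add: mult.commute)
    qed
    finally show ?thesis by simp
  qed
  finally show ?thesis by (simp add: K_def)
qed

lemma card_Ui:
  assumes "i < h" "1 \<le> r"
  shows "card {k \<in> users h r. i \<in> k} = (h - 1) choose (r - 1)"
proof -
  let ?A = "{A. A \<subseteq> {..<h} - {i} \<and> card A = r - 1}"
  have fin: "finite ({..<h} - {i})" by simp
  have "{k \<in> users h r. i \<in> k} = insert i ` ?A"
  proof
    show "{k \<in> users h r. i \<in> k} \<subseteq> insert i ` ?A"
    proof
      fix k assume k: "k \<in> {k \<in> users h r. i \<in> k}"
      then have fk: "finite k" by (auto simp: users_def intro: finite_subset)
      have "k = insert i (k - {i})" using k by auto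
      moreover have "k - {i} \<in> ?A" using k fk by (auto simp: users_def)
      ultimately show "k \<in> insert i ` ?A" by blast
    qed
    show "insert i ` ?A \<subseteq> {k \<in> users h r. i \<in> k}"
    proof
      fix k assume "k \<in> insert i ` ?A"
      then obtain A where A: "A \<in> ?A" "k = insert i A" by blast
      have "finite A" using A(1) by (auto intro: finite_subset[OF _ fin])
      moreover have "i \<notin> A" using A(1) by auto
      ultimately have "card k = r" using A assms(2) by auto
      then show "k \<in> {k \<in> users h r. i \<in> k}" using A assms(1) by (auto simp: users_def)
    qed
  qed
  moreover have "inj_on (insert i) ?A"
    by (rule inj_onI) (metis Diff_insert_absorb mem_Collect_eq subset_Diff_insert)
  ultimately have "card {k \<in> users h r. i \<in> k} = card ?A" by (simp add: card_image)
  also have "\<dots> = (h - 1) choose (r - 1)" using n_subsets[OF fin, of "r - 1"] assms(1) by simp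
  finally show ?thesis .
qed

lemma finite_users: "finite (users h r)"
proof -
  have "users h r \<subseteq> Pow {..<h}" by (auto simp: users_def)
  then show ?thesis by (rule finite_subset) simp
qed

lemma cancel_xor:
  assumes "finite S" "k \<in> S" "\<forall>u\<in>S - {k}. g u = g' u"
    and "odd (card {u\<in>S. g u}) = odd (card {u\<in>S. g' u})"
  shows "g k = g' k"
proof -
  have e: "card {u\<in>S. g u} = card {u\<in>S - {k}. g u} + (if g k then 1 else 0)" for g
  proof -
    have "{u\<in>S. g u} = {u\<in>S - {k}. g u} \<union> (if g k then {k} else {})" using assms(2) by auto
    then show ?thesis using assms(1) by (auto simp: card_insert_if)
  qed
  have "{u\<in>S - {k}. g u} = {u\<in>S - {k}. g' u}" using assms(3) by auto
  then show ?thesis using assms(4) e[of g] e[of g'] by (auto split: if_splits)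
qed



datatype role = RA nat | RB nat | Blk "nat set set" nat
datatype xent = XS "nat set set" nat | XL "nat set" nat

lemma card_restrict_image:
  fixes g :: "'w \<Rightarrow> 'a \<Rightarrow> bool"
  assumes "finite E" "\<And>W. f W = restrict (g W) E"
  shows "card (f ` S) \<le> 2 ^ card E"
proof -
  have "f ` S \<subseteq> PiE E (\<lambda>_. UNIV :: bool set)" using assms(2) by auto
  moreover have "finite (PiE E (\<lambda>_. UNIV :: bool set))" using assms(1) by (simp add: finite_PiE)
  ultimately have "card (f ` S) \<le> card (PiE E (\<lambda>_. UNIV :: bool set))" by (rule card_mono[rotated])
  also have "\<dots> = 2 ^ card E" using assms(1) by (simp add: card_PiE)
  finally show ?thesis .
qed

locale sch =
  fixes h r D :: nat and N a :: real and \<mu> :: "nat \<Rightarrow> real" and F :: nat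
  assumes r1: "1 \<le> r" and rh: "r < h" and D1: "1 \<le> D" and N0: "0 \<le> N" and ND: "N * real r \<le> real D"
    and a0: "0 \<le> a" and a1: "a \<le> 1" and mu0: "\<And>t. 0 \<le> \<mu> t"
    and mu1: "(\<Sum>t\<le>(h - 1) choose (r - 1). \<mu> t) = 1"
begin

definition "K = (h - 1) choose (r - 1)"
definition "rho = N * real r / real D"
definition "B = (F + r - 1) div r"
definition "S = B + r + h * r"
definition "S0 = F div r"
definition "sR = nat \<lfloor>rho * real S0\<rfloor>"
definition "sA = nat \<lfloor>a * rho * real S0\<rfloor>"
definition "m t = nat \<lfloor>\<mu> t * (1 - rho) * real S0 / real (K choose t)\<rfloor>"
definition "Ui i = {k \<in> users h r. i \<in> k}"
definition "RR = RA ` {..<sA} \<union> RB ` {..<sR - sA}"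
definition "BB i = (\<Union>T\<in>Pow (Ui i). (\<lambda>q. Blk T q) ` {..<m (card T)})"
definition "Rset i = RR \<union> BB i"
definition "iota i = (SOME f. inj_on f (Rset i) \<and> f ` Rset i \<subseteq> {..<S})"
definition "Lft i = {..<S} - iota i ` Rset i"
definition "bt W n i q = pb r F B W n i q"
definition "ZR i k = RA ` {..<sA} \<union> (\<Union>T\<in>{T\<in>Pow (Ui i). k \<in> T}. (\<lambda>q. Blk T q) ` {..<m (card T)})"
definition "EV = {1..D} \<times> RR"
definition "V' i W = restrict (\<lambda>(n, ro). bt W n i (iota i ro)) EV"
definition "EZ k = (SIGMA i:k. {1..D} \<times> ZR i k)"
definition "Z' k W = restrict (\<lambda>(i, n, ro). bt W n i (iota i ro)) (EZ k)"
definition "EXs i = (\<Union>S'\<in>Pow (Ui i) - {{}}. (\<lambda>q. XS S' q) ` {..<m (card S' - 1)}) \<union> (\<Union>u\<in>Ui i. (\<lambda>q. XL u q) ` Lft i)"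
definition "xf i d W e = (case e of XS S' q \<Rightarrow> odd (card {u\<in>S'. bt W (d u) i (iota i (Blk (S' - {u}) q))})
                                 | XL u q \<Rightarrow> bt W (d u) i q)"
definition "X' i d W = restrict (xf i d W) (EXs i)"
definition "EY i d k = Inl ` ((\<Union>T\<in>Pow (Ui i - {k}). (\<lambda>q. XS (insert k T) q) ` {..<m (card T)}) \<union> (\<lambda>q. XL k q) ` Lft i)
                      \<union> Inr ` ({d k} \<times> RB ` {..<sR - sA})"
definition "phi i d k x v = restrict (\<lambda>e. case e of Inl c \<Rightarrow> x c | Inr c \<Rightarrow> v c) (EY i d k)"
definition "Y' i d k W = phi i d k (X' i d W) (V' i W)"

definition "sgm = (\<Sum>t\<le>K. \<mu> t * real t / real K)"
definition "Mv = D * (a * rho + (1 - rho) * sgm)"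
definition "R1v = (1 - rho) / real r * (\<Sum>t\<le>K. \<mu> t * (real K - real t) / (real t + 1))"
definition "R2v = (1 - Mv / real D) / real r"
definition "c0 = r + h * r + 2 + 2 ^ K"

lemma K1: "K \<ge> 1" unfolding K_def using zero_less_binomial[of "r - 1" "h - 1"] r1 rh by linarith
lemma rho0: "0 \<le> rho" using N0 D1 by (simp add: rho_def)
lemma rho1: "rho \<le> 1" using ND D1 by (simp add: rho_def)
lemma finite_Ui: "finite (Ui i)" using finite_users by (simp add: Ui_def)
lemma card_Ui: "i < h \<Longrightarrow> card (Ui i) = K"
  using card_Ui[of i h r] r1 by (simp add: Ui_def K_def)

lemma m_upper: "t \<le> K \<Longrightarrow> real (K choose t) * real (m t) \<le> \<mu> t * (1 - rho) * real S0"
proof -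
  assume t: "t \<le> K"
  have C: "real (K choose t) > 0" using t by simp
  have x0: "0 \<le> \<mu> t * (1 - rho) * real S0 / real (K choose t)" using mu0[of t] rho1 C by simp
  have "real (m t) \<le> \<mu> t * (1 - rho) * real S0 / real (K choose t)"
    unfolding m_def using x0 by linarith
  then show ?thesis using C by (simp add: field_simps)
qed

lemma m_lower: "t \<le> K \<Longrightarrow> real (K choose t) * real (m t) \<ge> \<mu> t * (1 - rho) * real S0 - real (K choose t)"
proof -
  assume t: "t \<le> K"
  have C: "real (K choose t) > 0" using t by simp
  have x0: "0 \<le> \<mu> t * (1 - rho) * real S0 / real (K choose t)" using mu0[of t] rho1 C by simp
  have "real (m t) \<ge> \<mu> t * (1 - rho) * real S0 / real (K choose t) - 1"
    unfolding m_def using x0 by linarith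
  then show ?thesis using C by (simp add: field_simps)
qed

lemma sA_le_sR: "sA \<le> sR"
proof -
  have "a * rho * real S0 \<le> rho * real S0" using mult_right_mono[OF mult_right_mono[OF a1 rho0], of "real S0"] by simp
  then show ?thesis unfolding sA_def sR_def by (intro nat_mono floor_mono)
qed

lemma sR_upper: "real sR \<le> rho * real S0" using rho0 by (simp add: sR_def)
lemma sR_lower: "real sR \<ge> rho * real S0 - 1" using rho0 unfolding sR_def by linarith
lemma sA_upper: "real sA \<le> a * rho * real S0" using rho0 a0 by (simp add: sA_def)
lemma sA_lower: "real sA \<ge> a * rho * real S0 - 1" using rho0 a0 unfolding sA_def by linarith

lemma card_RR: "card RR = sR"
proof -
  have "card RR = card (RA ` {..<sA}) + card (RB ` {..<sR - sA})"
    unfolding RR_def by (rule card_Un_disjoint) auto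
  also have "\<dots> = sA + (sR - sA)" by (simp add: card_image inj_on_def)
  finally show ?thesis using sA_le_sR by simp
qed

lemma finite_RR: "finite RR" by (simp add: RR_def)

lemma card_BB: "card (BB i) = (\<Sum>T\<in>Pow (Ui i). m (card T))"
proof -
  have "card (BB i) = (\<Sum>T\<in>Pow (Ui i). card ((\<lambda>q. Blk T q) ` {..<m (card T)}))"
    unfolding BB_def by (rule card_UN_disjoint) (use finite_Ui in auto)
  also have "\<dots> = (\<Sum>T\<in>Pow (Ui i). m (card T))" by (simp add: card_image inj_on_def)
  finally show ?thesis .
qed

lemma finite_BB: "finite (BB i)" unfolding BB_def using finite_Ui by (intro finite_UN_I) auto

lemma card_Rset: "card (Rset i) = sR + (\<Sum>T\<in>Pow (Ui i). m (card T))"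
proof -
  have "card (Rset i) = card RR + card (BB i)"
  proof -
    have "RR \<inter> BB i = {}" by (auto simp: RR_def BB_def)
    then show ?thesis unfolding Rset_def by (intro card_Un_disjoint finite_RR finite_BB)
  qed
  then show ?thesis by (simp add: card_RR card_BB)
qed

lemma sumBB: assumes "i < h" shows "real (\<Sum>T\<in>Pow (Ui i). m (card T)) = (\<Sum>t\<le>K. real (K choose t) * real (m t))"
  using pow_sum[where f="\<lambda>t. real (m t)" and U="Ui i", OF finite_Ui] card_Ui[OF assms] by (simp add: of_nat_sum)

lemma S0_le: "real r * real S0 \<le> real F"
proof -
  have "r * (F div r) \<le> F" by simp
  then show ?thesis unfolding S0_def by (metis of_nat_le_iff of_nat_mult)
qed

lemma card_Rset_upper: "i < h \<Longrightarrow> real (card (Rset i)) \<le> real S0"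
proof -
  assume i: "i < h"
  have "real (card (Rset i)) = real sR + (\<Sum>t\<le>K. real (K choose t) * real (m t))"
    by (simp only: card_Rset of_nat_add sumBB[OF i])
  also have "\<dots> \<le> rho * real S0 + (\<Sum>t\<le>K. \<mu> t * (1 - rho) * real S0)"
    by (intro add_mono sR_upper sum_mono m_upper) auto
  also have "(\<Sum>t\<le>K. \<mu> t * (1 - rho) * real S0) = (1 - rho) * real S0"
    using mu1 by (simp add: sum_distrib_right[symmetric] K_def)
  finally show ?thesis by (simp add: algebra_simps)
qed

lemma S_ge: "S0 \<le> S"
proof -
  have "F \<le> F + r - 1" using r1 by simp
  then have "F div r \<le> (F + r - 1) div r" by (rule div_le_mono)
  then show ?thesis by (simp add: S_def S0_def B_def)
qed

lemma iota: "i < h \<Longrightarrow> inj_on (iota i) (Rset i) \<and> iota i ` Rset i \<subseteq> {..<S}"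
proof -
  assume i: "i < h"
  have "card (Rset i) \<le> card {..<S}" using card_Rset_upper[OF i] S_ge by simp
  then obtain f where "f ` Rset i \<subseteq> {..<S}" "inj_on f (Rset i)"
    using card_le_inj[of "Rset i" "{..<S}"] finite_RR finite_BB by (auto simp: Rset_def)
  then have "\<exists>f. inj_on f (Rset i) \<and> f ` Rset i \<subseteq> {..<S}" by blast
  from someI_ex[OF this] show ?thesis unfolding iota_def .
qed

lemma card_Lft: "i < h \<Longrightarrow> real (card (Lft i)) \<le> real c0"
proof -
  assume i: "i < h"
  have sub: "iota i ` Rset i \<subseteq> {..<S}" using iota[OF i] by blast
  have "card (Lft i) = S - card (iota i ` Rset i)" unfolding Lft_def
    by (subst card_Diff_subset) (use sub finite_RR finite_BB in \<open>auto simp: Rset_def intro: finite_subset\<close>)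
  also have "card (iota i ` Rset i) = card (Rset i)" using iota[OF i] by (simp add: card_image)
  finally have cl: "card (Lft i) = S - card (Rset i)" .
  have low: "real (card (Rset i)) \<ge> real S0 - 1 - 2 ^ K"
  proof -
    have "real (card (Rset i)) = real sR + (\<Sum>t\<le>K. real (K choose t) * real (m t))"
      by (simp only: card_Rset of_nat_add sumBB[OF i])
    also have "\<dots> \<ge> (rho * real S0 - 1) + (\<Sum>t\<le>K. \<mu> t * (1 - rho) * real S0 - real (K choose t))"
      by (intro add_mono sR_lower sum_mono m_lower) auto
    finally have "real (card (Rset i)) \<ge> rho * real S0 - 1 + ((1 - rho) * real S0 - real (\<Sum>t\<le>K. K choose t))"
      using mu1 by (simp add: sum_subtractf sum_distrib_right[symmetric] K_def)
    then show ?thesis by (simp add: choose_row_sum algebra_simps)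
  qed
  have "B \<le> S0 + 1"
  proof -
    have "(F + r - 1) div r \<le> (F + r) div r" by (simp add: div_le_mono)
    also have "(F + r) div r = F div r + 1" using r1 by simp
    finally show ?thesis by (simp add: B_def S0_def)
  qed
  then have "real S \<le> real S0 + 1 + real r + real h * real r" by (simp add: S_def)
  moreover have "real (card (Rset i)) \<le> real S" using card_Rset_upper[OF i] S_ge
    by (meson of_nat_le_iff order_trans)
  ultimately show ?thesis using cl low by (simp add: c0_def of_nat_diff)
qed

end


context sch begin

lemma sgm0: "0 \<le> sgm" unfolding sgm_def using mu0 by (intro sum_nonneg) auto
lemma sgm1: "sgm \<le> 1"
proof -
  have "sgm \<le> (\<Sum>t\<le>K. \<mu> t)" unfolding sgm_def
  proof (rule sum_mono)
    fix t assume "t \<in> {..K}"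
    then have "real t / real K \<le> 1" using K1 by simp
    then show "\<mu> t * real t / real K \<le> \<mu> t" using mu0[of t]
      by (metis mult_left_le times_divide_eq_right)
  qed
  then show ?thesis using mu1 by (simp add: K_def)
qed

lemma Mv_alt: "Mv = a * N * real r + (real D - N * real r) * sgm"
  using D1 by (simp add: Mv_def rho_def algebra_simps)

lemma Mv0: "0 \<le> Mv" unfolding Mv_def using a0 rho0 rho1 sgm0 by (intro mult_nonneg_nonneg add_nonneg_nonneg) auto

lemma Mv_le: "Mv \<le> real D"
proof -
  have "a * rho + (1 - rho) * sgm \<le> rho + (1 - rho)"
    using a0 a1 rho0 rho1 sgm1 sgm0 by (intro add_mono) (auto simp: mult_left_le_one_le mult_right_le_one_le)
  then show ?thesis unfolding Mv_def using D1 by (simp add: mult_le_cancel_left1)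
qed

lemma R1v0: "0 \<le> R1v" unfolding R1v_def using rho1 mu0 r1
  by (intro mult_nonneg_nonneg divide_nonneg_nonneg sum_nonneg) auto

lemma R2v0: "0 \<le> R2v" unfolding R2v_def using Mv_le D1 by simp

lemma EV_bound: "real (card EV) \<le> N * real F"
proof -
  have "card EV = D * sR" by (simp add: EV_def card_cartesian_product card_RR)
  then have "real (card EV) = real D * real sR" by simp
  also have "\<dots> \<le> real D * (rho * real S0)" using sR_upper D1 by (intro mult_left_mono) auto
  also have "\<dots> = N * (real r * real S0)" using D1 by (simp add: rho_def)
  also have "\<dots> \<le> N * real F" using S0_le N0 by (intro mult_left_mono) auto
  finally show ?thesis .
qed

lemma finite_EV: "finite EV" by (simp add: EV_def finite_RR)

lemma users_card: "k \<in> users h r \<Longrightarrow> finite k \<and> card k = r \<and> k \<subseteq> {..<h}"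
  by (auto simp: users_def intro: finite_subset)

lemma Ui_mem: "k \<in> users h r \<Longrightarrow> i \<in> k \<Longrightarrow> k \<in> Ui i" by (simp add: Ui_def)

lemma ZR_bound:
  assumes k: "k \<in> users h r" and i: "i \<in> k"
  shows "real (card (ZR i k)) \<le> a * rho * real S0 + (1 - rho) * real S0 * sgm"
proof -
  have ih: "i < h" using users_card[OF k] i by auto
  have kU: "k \<in> Ui i" using Ui_mem[OF k i] .
  have fin: "finite {T\<in>Pow (Ui i). k \<in> T}" using finite_Ui by simp
  have "card (ZR i k) \<le> card (RA ` {..<sA}) + card (\<Union>T\<in>{T\<in>Pow (Ui i). k \<in> T}. (\<lambda>q. Blk T q) ` {..<m (card T)})"
    unfolding ZR_def by (rule card_Un_le)
  also have "\<dots> \<le> sA + (\<Sum>T\<in>{T\<in>Pow (Ui i). k \<in> T}. card ((\<lambda>q. Blk T q) ` {..<m (card T)}))"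
    by (intro add_mono card_UN_le fin) (simp add: card_image inj_on_def)
  also have "\<dots> \<le> sA + (\<Sum>T\<in>{T\<in>Pow (Ui i). k \<in> T}. m (card T))"
    by (intro add_mono sum_mono) (simp_all add: card_image inj_on_def)
  finally have "real (card (ZR i k)) \<le> real (sA + (\<Sum>T\<in>{T\<in>Pow (Ui i). k \<in> T}. m (card T)))"
    by (simp only: of_nat_le_iff)
  then have c: "real (card (ZR i k)) \<le> real sA + (\<Sum>T\<in>{T\<in>Pow (Ui i). k \<in> T}. real (m (card T)))"
    by (simp add: of_nat_sum)
  have "(\<Sum>T\<in>{T\<in>Pow (Ui i). k \<in> T}. real (m (card T))) = (\<Sum>t\<le>K. real (K choose t) * real t / real K * real (m t))"
    using pow_sum_in[where f="\<lambda>t. real (m t)", OF finite_Ui kU] card_Ui[OF ih] by simp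
  also have "\<dots> \<le> (\<Sum>t\<le>K. real t / real K * (\<mu> t * (1 - rho) * real S0))"
  proof (rule sum_mono)
    fix t assume "t \<in> {..K}"
    then have "real (K choose t) * real (m t) \<le> \<mu> t * (1 - rho) * real S0" using m_upper by auto
    then have "real t / real K * (real (K choose t) * real (m t)) \<le> real t / real K * (\<mu> t * (1 - rho) * real S0)"
      by (intro mult_left_mono) auto
    then show "real (K choose t) * real t / real K * real (m t) \<le> real t / real K * (\<mu> t * (1 - rho) * real S0)"
      by (simp add: algebra_simps)
  qed
  also have "\<dots> = (1 - rho) * real S0 * sgm"
    unfolding sgm_def by (simp add: sum_distrib_left algebra_simps)
  finally show ?thesis using c sA_upper by linarith
qed

lemma EZ_bound:
  assumes k: "k \<in> users h r"
  shows "real (card (EZ k)) \<le> Mv * real F"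
proof -
  have fk: "finite k" "card k = r" using users_card[OF k] by auto
  have fZR: "finite (ZR i k)" for i
    unfolding ZR_def by (intro finite_UnI finite_UN_I finite_imageI) (auto simp: finite_Ui)
  have "card (EZ k) = (\<Sum>i\<in>k. card ({1..D} \<times> ZR i k))"
    unfolding EZ_def by (rule card_SigmaI) (use fk fZR in auto)
  then have "real (card (EZ k)) = (\<Sum>i\<in>k. real D * real (card (ZR i k)))"
    by (simp add: card_cartesian_product)
  also have "\<dots> \<le> (\<Sum>i\<in>k. real D * (a * rho * real S0 + (1 - rho) * real S0 * sgm))"
    by (intro sum_mono mult_left_mono ZR_bound[OF k]) auto
  also have "\<dots> = real r * real S0 * Mv" using fk by (simp add: Mv_def algebra_simps)
  also have "\<dots> \<le> Mv * real F" using mult_right_mono[OF S0_le Mv0] by (simp add: mult.commute)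
  finally show ?thesis .
qed

lemma finite_EZ: "k \<in> users h r \<Longrightarrow> finite (EZ k)"
  unfolding EZ_def ZR_def using users_card finite_Ui
  by (intro finite_SigmaI finite_cartesian_product finite_Un conjI finite_UN_I) auto

lemma finite_Lft: "finite (Lft i)" by (simp add: Lft_def)

lemma finite_EXs: "finite (EXs i)"
  unfolding EXs_def by (intro finite_UnI finite_UN_I finite_imageI) (auto simp: finite_Ui finite_Lft)

lemma EXs_bound:
  assumes ih: "i < h"
  shows "real (card (EXs i)) \<le> R1v * real F + real K * real c0"
proof -
  let ?A = "\<Union>S'\<in>Pow (Ui i) - {{}}. (\<lambda>q. XS S' q) ` {..<m (card S' - 1)}"
  let ?L = "\<Union>u\<in>Ui i. (\<lambda>q. XL u q) ` Lft i"
  have "card (EXs i) \<le> card ?A + card ?L" unfolding EXs_def by (rule card_Un_le)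
  also have "card ?A \<le> (\<Sum>S'\<in>Pow (Ui i) - {{}}. m (card S' - 1))"
  proof -
    have "card ?A \<le> (\<Sum>S'\<in>Pow (Ui i) - {{}}. card ((\<lambda>q. XS S' q) ` {..<m (card S' - 1)}))"
      by (rule card_UN_le) (use finite_Ui in simp)
    also have "\<dots> \<le> (\<Sum>S'\<in>Pow (Ui i) - {{}}. m (card S' - 1))"
      by (rule sum_mono) (simp add: card_image inj_on_def)
    finally show ?thesis .
  qed
  also have "card ?L \<le> (\<Sum>u\<in>Ui i. card ((\<lambda>q. XL u q) ` Lft i))"
    by (rule card_UN_le) (use finite_Ui in simp)
  also have "\<dots> \<le> (\<Sum>u\<in>Ui i. card (Lft i))" by (rule sum_mono) (simp add: card_image inj_on_def)
  also have "\<dots> = K * card (Lft i)" using card_Ui[OF ih] by simp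
  finally have "real (card (EXs i)) \<le> real ((\<Sum>S'\<in>Pow (Ui i) - {{}}. m (card S' - 1)) + K * card (Lft i))"
    by (simp only: of_nat_le_iff)
  then have c: "real (card (EXs i)) \<le> (\<Sum>S'\<in>Pow (Ui i) - {{}}. real (m (card S' - 1))) + real K * real (card (Lft i))"
    by (simp add: of_nat_sum)
  have "(\<Sum>S'\<in>Pow (Ui i) - {{}}. real (m (card S' - 1))) =
        (\<Sum>t\<le>K. real (K choose t) * (real K - real t) / (real t + 1) * real (m t))"
    using pow_sum_ne[where f="\<lambda>t. real (m t)", OF finite_Ui] card_Ui[OF ih] K1 by simp
  also have "\<dots> \<le> (\<Sum>t\<le>K. (real K - real t) / (real t + 1) * (\<mu> t * (1 - rho) * real S0))"
  proof (rule sum_mono)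
    fix t assume t: "t \<in> {..K}"
    then have "real (K choose t) * real (m t) \<le> \<mu> t * (1 - rho) * real S0" using m_upper by auto
    moreover have "0 \<le> (real K - real t) / (real t + 1)" using t by simp
    ultimately have "(real K - real t) / (real t + 1) * (real (K choose t) * real (m t))
       \<le> (real K - real t) / (real t + 1) * (\<mu> t * (1 - rho) * real S0)"
      by (intro mult_left_mono) auto
    then show "real (K choose t) * (real K - real t) / (real t + 1) * real (m t)
       \<le> (real K - real t) / (real t + 1) * (\<mu> t * (1 - rho) * real S0)"
      by (simp add: algebra_simps)
  qed
  also have "\<dots> = (1 - rho) * real S0 * (\<Sum>t\<le>K. \<mu> t * (real K - real t) / (real t + 1))"
    unfolding sum_distrib_left by (rule sum.cong[OF refl]) (simp add: field_simps)
  also have "\<dots> = real r * real S0 * R1v" using r1 by (simp add: R1v_def)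
  also have "\<dots> \<le> R1v * real F" using mult_right_mono[OF S0_le R1v0] by (simp add: mult.commute)
  finally have "(\<Sum>S'\<in>Pow (Ui i) - {{}}. real (m (card S' - 1))) \<le> R1v * real F" .
  moreover have "real K * real (card (Lft i)) \<le> real K * real c0"
    using card_Lft[OF ih] by (intro mult_left_mono) auto
  ultimately show ?thesis using c by linarith
qed

lemma finite_EY: "finite (EY i (d :: nat set \<Rightarrow> nat) k)"
  unfolding EY_def by (intro finite_UnI finite_UN_I finite_imageI finite_cartesian_product) (auto simp: finite_Ui finite_Lft)

lemma EY_bound:
  fixes d :: "nat set \<Rightarrow> nat"
  assumes k: "k \<in> users h r" and i: "i \<in> k"
  shows "real (card (EY i d k)) \<le> R2v * real F + real c0 + 1"
proof -
  have ih: "i < h" using users_card[OF k] i by auto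
  have kU: "k \<in> Ui i" using Ui_mem[OF k i] .
  let ?A = "\<Union>T\<in>Pow (Ui i - {k}). (\<lambda>q. XS (insert k T) q) ` {..<m (card T)}"
  let ?L = "(\<lambda>q. XL k q) ` Lft i"
  let ?R = "{d k} \<times> RB ` {..<sR - sA}"
  have "card (EY i d k) \<le> card (Inl ` (?A \<union> ?L) :: (xent + nat \<times> role) set) + card (Inr ` ?R :: (xent + nat \<times> role) set)"
    unfolding EY_def by (rule card_Un_le)
  also have "\<dots> \<le> card (?A \<union> ?L) + card ?R" by (intro add_mono card_image_le) (use finite_Ui finite_Lft in auto)
  also have "\<dots> \<le> card ?A + card ?L + card ?R" by (simp add: card_Un_le)
  also have "card ?A \<le> (\<Sum>T\<in>Pow (Ui i - {k}). m (card T))"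
  proof -
    have "card ?A \<le> (\<Sum>T\<in>Pow (Ui i - {k}). card ((\<lambda>q. XS (insert k T) q) ` {..<m (card T)}))"
      by (rule card_UN_le) (use finite_Ui in simp)
    also have "\<dots> \<le> (\<Sum>T\<in>Pow (Ui i - {k}). m (card T))"
      by (rule sum_mono) (simp add: card_image inj_on_def)
    finally show ?thesis .
  qed
  also have "card ?L \<le> card (Lft i)" by (rule card_image_le) (rule finite_Lft)
  also have "card ?R = sR - sA" by (simp add: card_cartesian_product card_image inj_on_def)
  finally have "real (card (EY i d k)) \<le> real ((\<Sum>T\<in>Pow (Ui i - {k}). m (card T)) + card (Lft i) + (sR - sA))"
    by (simp only: of_nat_le_iff)
  then have c: "real (card (EY i d k)) \<le> (\<Sum>T\<in>Pow (Ui i - {k}). real (m (card T))) + real (card (Lft i)) + (real sR - real sA)"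
    using sA_le_sR by (simp add: of_nat_sum of_nat_diff)
  have "(\<Sum>T\<in>Pow (Ui i - {k}). real (m (card T))) = (\<Sum>t\<le>K. real (K choose t) * (real K - real t) / real K * real (m t))"
    using pow_sum_notin[where f="\<lambda>t. real (m t)", OF finite_Ui kU] card_Ui[OF ih] by simp
  also have "\<dots> \<le> (\<Sum>t\<le>K. (real K - real t) / real K * (\<mu> t * (1 - rho) * real S0))"
  proof (rule sum_mono)
    fix t assume t: "t \<in> {..K}"
    then have "real (K choose t) * real (m t) \<le> \<mu> t * (1 - rho) * real S0" using m_upper by auto
    moreover have "0 \<le> (real K - real t) / real K" using t by simp
    ultimately have "(real K - real t) / real K * (real (K choose t) * real (m t))
       \<le> (real K - real t) / real K * (\<mu> t * (1 - rho) * real S0)"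
      by (intro mult_left_mono) auto
    then show "real (K choose t) * (real K - real t) / real K * real (m t)
       \<le> (real K - real t) / real K * (\<mu> t * (1 - rho) * real S0)"
      by (simp add: algebra_simps)
  qed
  also have "\<dots> = (1 - rho) * real S0 * (1 - sgm)"
  proof -
    have "(\<Sum>t\<le>K. (real K - real t) / real K * (\<mu> t * (1 - rho) * real S0))
        = (1 - rho) * real S0 * (\<Sum>t\<le>K. \<mu> t - \<mu> t * real t / real K)"
      using K1 by (simp add: sum_distrib_left field_simps)
    also have "(\<Sum>t\<le>K. \<mu> t - \<mu> t * real t / real K) = 1 - sgm"
      using mu1 by (simp add: sum_subtractf sgm_def K_def)
    finally show ?thesis .
  qed
  finally have A: "(\<Sum>T\<in>Pow (Ui i - {k}). real (m (card T))) \<le> (1 - rho) * real S0 * (1 - sgm)" .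
  have "(1 - rho) * real S0 * (1 - sgm) + (real sR - real sA) \<le> real S0 * (1 - Mv / real D) + 1"
  proof -
    have "real sR - real sA \<le> rho * real S0 - (a * rho * real S0 - 1)" using sR_upper sA_lower by linarith
    moreover have "real S0 * (1 - Mv / real D) = (1 - rho) * real S0 * (1 - sgm) + (rho * real S0 - a * rho * real S0)"
    proof -
      have e: "Mv / real D = a * rho + (1 - rho) * sgm" using D1 by (simp add: Mv_def)
      show ?thesis unfolding e by (simp add: algebra_simps)
    qed
    ultimately show ?thesis by linarith
  qed
  also have "real S0 * (1 - Mv / real D) = real r * real S0 * R2v" using r1 by (simp add: R2v_def)
  also have "real r * real S0 * R2v \<le> R2v * real F" using mult_right_mono[OF S0_le R2v0] by (simp add: mult.commute)
  finally show ?thesis using c A card_Lft[OF ih] by linarith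
qed

end


context sch begin

lemma FB: "F \<le> r * B"
proof -
  have "F + r - 1 < r * ((F + r - 1) div r) + r" using r1
    by (metis add.commute add_less_cancel_left div_mult_mod_eq mod_less_divisor mult.commute le_trans zero_less_one less_le_trans)
  then show ?thesis using r1 by (simp add: B_def)
qed

lemma dem: "d \<in> demands h r D \<Longrightarrow> u \<in> users h r \<Longrightarrow> d u \<in> {1..D}"
  by (auto simp: demands_def)

lemma det:
  fixes d :: "nat set \<Rightarrow> nat"
  assumes d: "d \<in> demands h r D" and k: "k \<in> users h r"
    and W: "W \<in> libraries D F" and W': "W' \<in> libraries D F"
    and Z: "Z' k W = Z' k W'" and Y: "\<forall>i\<in>k. Y' i d k W = Y' i d k W'"
  shows "W (d k) = W' (d k)"
proof -
  have ku: "finite k" "card k = r" "k \<subseteq> {..<h}" using users_card[OF k] by auto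
  have Zv: "bt W n i (iota i ro) = bt W' n i (iota i ro)" if "(i, n, ro) \<in> EZ k" for i n ro
    using fun_cong[OF Z, of "(i, n, ro)"] that by (simp add: Z'_def)
  have Yv: "(case e of Inl c \<Rightarrow> X' i d W c | Inr c \<Rightarrow> V' i W c) = (case e of Inl c \<Rightarrow> X' i d W' c | Inr c \<Rightarrow> V' i W' c)"
    if "i \<in> k" "e \<in> EY i d k" for i e
    using fun_cong[OF Y[rule_format, OF that(1)], of e] that(2) by (simp add: Y'_def phi_def)
  have main: "bt W (d k) i q = bt W' (d k) i q" if i: "i \<in> k" and q: "q < S" for i q
  proof -
    have ih: "i < h" using ku i by auto
    have kU: "k \<in> Ui i" using Ui_mem[OF k i] .
    have dk: "d k \<in> {1..D}" using dem[OF d k] .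
    have Xv: "xf i d W c = xf i d W' c" if "Inl c \<in> EY i d k" "c \<in> EXs i" for c
      using Yv[OF i that(1)] that(2) by (simp add: X'_def)
    show ?thesis
    proof (cases "q \<in> iota i ` Rset i")
      case False
      then have ql: "q \<in> Lft i" using q by (simp add: Lft_def)
      have "Inl (XL k q) \<in> EY i d k" using ql by (simp add: EY_def)
      moreover have "XL k q \<in> EXs i" using ql kU by (auto simp: EXs_def)
      ultimately have "xf i d W (XL k q) = xf i d W' (XL k q)" by (rule Xv)
      then show ?thesis by (simp add: xf_def)
    next
      case True
      then obtain ro where ro: "ro \<in> Rset i" and qro: "q = iota i ro" by blast
      show ?thesis
      proof (cases "ro \<in> RR")
        case True
        then consider (a) q' where "ro = RA q'" "q' < sA" | (b) q' where "ro = RB q'" "q' < sR - sA"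
          by (auto simp: RR_def)
        then show ?thesis
        proof cases
          case a
          then have "(i, d k, ro) \<in> EZ k" using i dk by (simp add: EZ_def ZR_def)
          then show ?thesis using Zv qro by simp
        next
          case b
          have "Inr (d k, ro) \<in> EY i d k" using b by (simp add: EY_def)
          moreover have "(d k, ro) \<in> EV" using dk True by (simp add: EV_def)
          ultimately show ?thesis using Yv[OF i, of "Inr (d k, ro)"] qro by (simp add: V'_def)
        qed
      next
        case False
        then have "ro \<in> BB i" using ro by (simp add: Rset_def)
        then obtain T q' where T: "T \<subseteq> Ui i" and q': "q' < m (card T)" and roT: "ro = Blk T q'"
          by (auto simp: BB_def)
        have fT: "finite T" using T finite_Ui finite_subset by blast
        show ?thesis
        proof (cases "k \<in> T")
          case True
          have "ro \<in> ZR i k" using T q' roT True by (auto simp: ZR_def)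
          then have "(i, d k, ro) \<in> EZ k" using i dk by (simp add: EZ_def)
          then show ?thesis using Zv qro by simp
        next
          case False
          define S' where "S' = insert k T"
          have cS: "card S' - 1 = card T" using fT False by (simp add: S'_def)
          have S'U: "S' \<subseteq> Ui i" using T kU by (simp add: S'_def)
          have fS: "finite S'" using fT by (simp add: S'_def)
          have e1: "Inl (XS S' q') \<in> EY i d k"
          proof -
            have "T \<in> Pow (Ui i - {k})" using T False by auto
            then show ?thesis using q' unfolding EY_def S'_def by blast
          qed
          have e2: "XS S' q' \<in> EXs i"
          proof -
            have "S' \<in> Pow (Ui i) - {{}}" using S'U by (auto simp: S'_def)
            moreover have "q' < m (card S' - 1)" using q' cS by simp
            ultimately show ?thesis unfolding EXs_def by blast
          qed
          let ?g = "\<lambda>u. bt W (d u) i (iota i (Blk (S' - {u}) q'))"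
          let ?g' = "\<lambda>u. bt W' (d u) i (iota i (Blk (S' - {u}) q'))"
          have par: "odd (card {u\<in>S'. ?g u}) = odd (card {u\<in>S'. ?g' u})"
            using Xv[OF e1 e2] by (simp add: xf_def)
          have others: "\<forall>u\<in>S' - {k}. ?g u = ?g' u"
          proof
            fix u assume u: "u \<in> S' - {k}"
            then have uT: "u \<in> T" by (simp add: S'_def)
            have uus: "u \<in> users h r" using uT T by (auto simp: Ui_def)
            have cu: "card (S' - {u}) = card T" using u fS cS by (simp add: card_Diff_singleton)
            have "Blk (S' - {u}) q' \<in> ZR i k"
            proof -
              have "S' - {u} \<in> {T\<in>Pow (Ui i). k \<in> T}" using S'U u by (auto simp: S'_def)
              moreover have "q' < m (card (S' - {u}))" using cu q' by simp
              ultimately show ?thesis unfolding ZR_def by blast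
            qed
            then have "(i, d u, Blk (S' - {u}) q') \<in> EZ k" using i dem[OF d uus] by (simp add: EZ_def)
            then show "?g u = ?g' u" using Zv by simp
          qed
          have "?g k = ?g' k" by (rule cancel_xor[OF fS _ others par]) (simp add: S'_def)
          moreover have "S' - {k} = T" using False by (auto simp: S'_def)
          ultimately show ?thesis using qro roT by simp
        qed
      qed
    qed
  qed
  show ?thesis
    by (rule file_det[OF W W' dem[OF d k] FB ku(3) ku(2)])
       (use main in \<open>simp add: bt_def S_def\<close>)
qed

lemma scheme:
  assumes eps: "\<epsilon> > 0" and dl: "\<delta> > 0"
    and big: "real K * real c0 + real c0 + 1 \<le> \<delta> * real F"
  shows "\<exists>V Z X Y G. valid_scheme h r D F Mv N (R1v + \<delta>) (R2v + \<delta>) \<epsilon> V Z X Y G"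
proof (rule reduce[where V'=V' and Z'=Z' and X'=X' and Y'=Y' and \<phi>=phi])
  show "\<epsilon> > 0" by (rule eps)
  show "\<forall>j<h. card (V' j ` libraries D F) \<le> 2 ^ card EV"
  proof (intro allI impI)
    fix j
    show "card (V' j ` libraries D F) \<le> 2 ^ card EV"
      by (rule card_restrict_image[OF finite_EV, where g="\<lambda>W. \<lambda>(n, ro). bt W n j (iota j ro)"])
         (simp add: V'_def)
  qed
  show "real (card EV) \<le> N * real F" by (rule EV_bound)
  show "\<forall>k\<in>users h r. card (Z' k ` libraries D F) \<le> 2 ^ nat \<lfloor>Mv * real F\<rfloor>"
  proof
    fix k assume k: "k \<in> users h r"
    have "card (Z' k ` libraries D F) \<le> 2 ^ card (EZ k)"
      by (rule card_restrict_image[OF finite_EZ[OF k], where g="\<lambda>W. \<lambda>(i, n, ro). bt W n i (iota i ro)"])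
         (simp add: Z'_def)
    also have "\<dots> \<le> 2 ^ nat \<lfloor>Mv * real F\<rfloor>"
      by (rule power_increasing) (use le_nat_floor[OF EZ_bound[OF k]] in auto)
    finally show "card (Z' k ` libraries D F) \<le> 2 ^ nat \<lfloor>Mv * real F\<rfloor>" .
  qed
  show "real (nat \<lfloor>Mv * real F\<rfloor>) \<le> Mv * real F" using Mv0 by (intro of_nat_floor) simp
  show "\<forall>d\<in>demands h r D. \<forall>i<h. card (X' i d ` libraries D F) \<le> 2 ^ nat \<lfloor>(R1v + \<delta>) * real F\<rfloor>"
  proof (intro ballI allI impI)
    fix d i assume i: "i < h"
    have "card (X' i d ` libraries D F) \<le> 2 ^ card (EXs i)"
      by (rule card_restrict_image[OF finite_EXs, where g="xf i d"]) (simp add: X'_def)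
    also have "\<dots> \<le> 2 ^ nat \<lfloor>(R1v + \<delta>) * real F\<rfloor>"
    proof (rule power_increasing)
      have "real (card (EXs i)) \<le> (R1v + \<delta>) * real F"
        using EXs_bound[OF i] big by (simp add: algebra_simps)
      then show "card (EXs i) \<le> nat \<lfloor>(R1v + \<delta>) * real F\<rfloor>" by (rule le_nat_floor)
    qed simp
    finally show "card (X' i d ` libraries D F) \<le> 2 ^ nat \<lfloor>(R1v + \<delta>) * real F\<rfloor>" .
  qed
  show "real (nat \<lfloor>(R1v + \<delta>) * real F\<rfloor>) \<le> (R1v + \<delta>) * real F"
    using R1v0 dl by (intro of_nat_floor) simp
  show "\<forall>d\<in>demands h r D. \<forall>k\<in>users h r. \<forall>i\<in>k. card (Y' i d k ` libraries D F) \<le> 2 ^ nat \<lfloor>(R2v + \<delta>) * real F\<rfloor>"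
  proof (intro ballI)
    fix d :: "nat set \<Rightarrow> nat" and k i assume k: "k \<in> users h r" and i: "i \<in> k"
    have "card (Y' i d k ` libraries D F) \<le> 2 ^ card (EY i d k)"
      by (rule card_restrict_image[OF finite_EY, where g="\<lambda>W e. case e of Inl c \<Rightarrow> X' i d W c | Inr c \<Rightarrow> V' i W c"])
         (simp add: Y'_def phi_def)
    also have "\<dots> \<le> 2 ^ nat \<lfloor>(R2v + \<delta>) * real F\<rfloor>"
    proof (rule power_increasing)
      have "real (card (EY i d k)) \<le> (R2v + \<delta>) * real F"
      proof -
        have nn: "0 \<le> real K * real c0" by simp
        have "(R2v + \<delta>) * real F = R2v * real F + \<delta> * real F" by (simp add: algebra_simps)
        then show ?thesis using EY_bound[OF k i, of d] big nn by linarith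
      qed
      then show "card (EY i d k) \<le> nat \<lfloor>(R2v + \<delta>) * real F\<rfloor>" by (rule le_nat_floor)
    qed simp
    finally show "card (Y' i d k ` libraries D F) \<le> 2 ^ nat \<lfloor>(R2v + \<delta>) * real F\<rfloor>" .
  qed
  show "real (nat \<lfloor>(R2v + \<delta>) * real F\<rfloor>) \<le> (R2v + \<delta>) * real F"
    using R2v0 dl by (intro of_nat_floor) simp
  show "\<And>d i k W. Y' i d k W = phi i d k (X' i d W) (V' i W)" by (simp add: Y'_def)
  show "\<And>d k W W'. d \<in> demands h r D \<Longrightarrow> k \<in> users h r \<Longrightarrow> W \<in> libraries D F \<Longrightarrow>
        W' \<in> libraries D F \<Longrightarrow> Z' k W = Z' k W' \<Longrightarrow> (\<forall>i\<in>k. Y' i d k W = Y' i d k W') \<Longrightarrow>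
        W (d k) = W' (d k)" by (rule det)
qed

end


lemma core:
  fixes h r D :: nat and N a \<delta> :: real and \<mu> :: "nat \<Rightarrow> real"
  assumes r1: "1 \<le> r" and rh: "r < h" and D1: "1 \<le> D" and N0: "0 \<le> N" and ND: "N * real r \<le> real D"
    and a0: "0 \<le> a" and a1: "a \<le> 1" and mu0: "\<And>t. 0 \<le> \<mu> t"
    and mu1: "(\<Sum>t\<le>(h - 1) choose (r - 1). \<mu> t) = 1" and dl: "\<delta> > 0"
  shows "achievable h r D
     (a * N * real r + (real D - N * real r) * (\<Sum>t\<le>(h - 1) choose (r - 1). \<mu> t * real t / real ((h - 1) choose (r - 1)))) N
     ((1 - N * real r / real D) / real r * (\<Sum>t\<le>(h - 1) choose (r - 1). \<mu> t * (real ((h - 1) choose (r - 1)) - real t) / (real t + 1)) + \<delta>)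
     ((1 - (a * N * real r + (real D - N * real r) * (\<Sum>t\<le>(h - 1) choose (r - 1). \<mu> t * real t / real ((h - 1) choose (r - 1)))) / real D) / real r + \<delta>)"
  unfolding achievable_def
proof (intro allI impI)
  fix \<epsilon> :: real assume eps: "\<epsilon> > 0"
  define K where "K = (h - 1) choose (r - 1)"
  define c0 where "c0 = r + h * r + 2 + 2 ^ K"
  define F0 where "F0 = nat \<lceil>(real K * real c0 + real c0 + 1) / \<delta>\<rceil>"
  show "\<exists>F0. \<forall>F\<ge>F0. \<exists>V Z X Y G. valid_scheme h r D F
     (a * N * real r + (real D - N * real r) * (\<Sum>t\<le>(h - 1) choose (r - 1). \<mu> t * real t / real ((h - 1) choose (r - 1)))) N
     ((1 - N * real r / real D) / real r * (\<Sum>t\<le>(h - 1) choose (r - 1). \<mu> t * (real ((h - 1) choose (r - 1)) - real t) / (real t + 1)) + \<delta>)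
     ((1 - (a * N * real r + (real D - N * real r) * (\<Sum>t\<le>(h - 1) choose (r - 1). \<mu> t * real t / real ((h - 1) choose (r - 1)))) / real D) / real r + \<delta>)
     \<epsilon> V Z X Y G"
  proof (rule exI[of _ F0], intro allI impI)
    fix F assume F: "F0 \<le> F"
    interpret S: sch h r D N a \<mu> F
      by unfold_locales (use assms in auto)
    have big: "real S.K * real S.c0 + real S.c0 + 1 \<le> \<delta> * real F"
    proof -
      have "(real K * real c0 + real c0 + 1) / \<delta> \<le> real F0" unfolding F0_def by linarith
      also have "\<dots> \<le> real F" using F by simp
      finally have "(real K * real c0 + real c0 + 1) / \<delta> \<le> real F" .
      then have "real K * real c0 + real c0 + 1 \<le> \<delta> * real F" using dl by (simp add: field_simps)
      then show ?thesis by (simp add: S.K_def S.c0_def K_def c0_def)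
    qed
    obtain V Z X Y G where v: "valid_scheme h r D F S.Mv N (S.R1v + \<delta>) (S.R2v + \<delta>) \<epsilon> V Z X Y G"
      using S.scheme[OF eps dl big] by blast
    have e1: "S.Mv = a * N * real r + (real D - N * real r) * (\<Sum>t\<le>(h - 1) choose (r - 1). \<mu> t * real t / real ((h - 1) choose (r - 1)))"
      by (simp add: S.Mv_alt S.sgm_def S.K_def)
    have e2: "S.R1v = (1 - N * real r / real D) / real r * (\<Sum>t\<le>(h - 1) choose (r - 1). \<mu> t * (real ((h - 1) choose (r - 1)) - real t) / (real t + 1))"
      by (simp add: S.R1v_def S.rho_def S.K_def)
    have e3: "S.R2v = (1 - (a * N * real r + (real D - N * real r) * (\<Sum>t\<le>(h - 1) choose (r - 1). \<mu> t * real t / real ((h - 1) choose (r - 1)))) / real D) / real r"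
      by (simp add: S.R2v_def e1)
    show "\<exists>V Z X Y G. valid_scheme h r D F
     (a * N * real r + (real D - N * real r) * (\<Sum>t\<le>(h - 1) choose (r - 1). \<mu> t * real t / real ((h - 1) choose (r - 1)))) N
     ((1 - N * real r / real D) / real r * (\<Sum>t\<le>(h - 1) choose (r - 1). \<mu> t * (real ((h - 1) choose (r - 1)) - real t) / (real t + 1)) + \<delta>)
     ((1 - (a * N * real r + (real D - N * real r) * (\<Sum>t\<le>(h - 1) choose (r - 1). \<mu> t * real t / real ((h - 1) choose (r - 1)))) / real D) / real r + \<delta>)
     \<epsilon> V Z X Y G"
      using v unfolding e1 e2 e3 by blast
  qed
qed



theorem theorem1:
  fixes h r D :: nat and N :: real
  assumes "1 \<le> r" and "r < h"
    and "h choose r \<le> D"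
    and "0 \<le> N" and "N \<le> real D / real r"
  defines "Kh \<equiv> (h - 1) choose (r - 1)"
  defines "Mt \<equiv> (\<lambda>t1 t2::nat. (real t1 - real t2) * N * real r / real Kh + real t2 * real D / real Kh)"
  defines "R1t \<equiv> (\<lambda>t2::nat. (real Kh - real t2) / (real r * (real t2 + 1)) * (1 - N * real r / real D))"
  defines "R2t \<equiv> (\<lambda>t1 t2::nat. 1 / real r * (1 - Mt t1 t2 / real D))"
  defines "P \<equiv> {(Mt t1 t2, R1t t2, R2t t1 t2) | t1 t2.
                  t1 \<le> min Kh (nat \<lfloor>real Kh * N / real D\<rfloor>) \<and> t2 \<le> Kh}"
  shows "(\<forall>t1 t2. t1 \<le> min Kh (nat \<lfloor>real Kh * N / real D\<rfloor>) \<and> t2 \<le> Kh \<longrightarrow>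
            (\<forall>\<delta>>0. achievable h r D (Mt t1 t2) N (R1t t2 + \<delta>) (R2t t1 t2 + \<delta>)))
       \<and> (\<forall>p \<in> convex hull P. \<forall>\<delta>>0.
            achievable h r D (fst p) N (fst (snd p) + \<delta>) (snd (snd p) + \<delta>))"
proof -
  have r1: "1 \<le> r" and rh: "r < h" using assms(1,2) .
  have Kh1: "Kh \<ge> 1" unfolding Kh_def using zero_less_binomial[of "r - 1" "h - 1"] r1 rh by linarith
  have D1: "1 \<le> D"
  proof -
    have "0 < h choose r" using rh by simp
    then show ?thesis using assms(3) by linarith
  qed
  have N0: "0 \<le> N" using assms(4) .
  have ND: "N * real r \<le> real D"
  proof -
    have "N * real r \<le> real D / real r * real r" using assms(5) r1 by (intro mult_right_mono) auto
    then show ?thesis using r1 by simp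
  qed
  define T where "T = {(t1, t2). t1 \<le> min Kh (nat \<lfloor>real Kh * N / real D\<rfloor>) \<and> t2 \<le> Kh}"
  define f where "f = (\<lambda>(t1, t2). (Mt t1 t2, R1t t2, R2t t1 t2))"
  have PT: "P = f ` T" unfolding P_def T_def f_def by auto
  have finT: "finite T"
  proof -
    have "T \<subseteq> {..Kh} \<times> {..Kh}" unfolding T_def by auto
    then show ?thesis by (rule finite_subset) simp
  qed
  have finP: "finite P" using PT finT by simp
  have hullres: "\<forall>p \<in> convex hull P. \<forall>\<delta>>0. achievable h r D (fst p) N (fst (snd p) + \<delta>) (snd (snd p) + \<delta>)"
  proof (intro ballI allI impI)
    fix p :: "real \<times> real \<times> real" and \<delta> :: real
    assume p: "p \<in> convex hull P" and dl: "\<delta> > 0"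
    obtain u where u0: "\<forall>x\<in>P. 0 \<le> u x" and u1: "sum u P = 1" and up: "(\<Sum>x\<in>P. u x *\<^sub>R x) = p"
      using p unfolding convex_hull_finite[OF finP] by blast
    define \<tau> where "\<tau> x = inv_into T f x" for x
    have \<tau>T: "\<tau> x \<in> T" if "x \<in> P" for x using that PT by (simp add: \<tau>_def inv_into_into)
    have f\<tau>: "f (\<tau> x) = x" if "x \<in> P" for x using that PT by (simp add: \<tau>_def f_inv_into_f)
    define \<tau>1 where "\<tau>1 x = fst (\<tau> x)" for x
    define \<tau>2 where "\<tau>2 x = snd (\<tau> x)" for x
    have t1K: "\<tau>1 x \<le> Kh" if "x \<in> P" for x using \<tau>T[OF that] by (auto simp: \<tau>1_def T_def)
    have t2K: "\<tau>2 x \<le> Kh" if "x \<in> P" for x using \<tau>T[OF that] by (auto simp: \<tau>2_def T_def)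
    have xeq: "x = (Mt (\<tau>1 x) (\<tau>2 x), R1t (\<tau>2 x), R2t (\<tau>1 x) (\<tau>2 x))" if "x \<in> P" for x
      using f\<tau>[OF that] by (simp add: f_def \<tau>1_def \<tau>2_def split: prod.splits)
    define a where "a = (\<Sum>x\<in>P. u x * real (\<tau>1 x) / real Kh)"
    define \<mu> where "\<mu> t = (\<Sum>x\<in>P. u x * (if \<tau>2 x = t then 1 else 0))" for t
    have key: "(\<Sum>t\<le>Kh. \<mu> t * g t) = (\<Sum>x\<in>P. u x * g (\<tau>2 x))" for g :: "nat \<Rightarrow> real"
    proof -
      have "(\<Sum>t\<le>Kh. \<mu> t * g t) = (\<Sum>t\<le>Kh. \<Sum>x\<in>P. (if t = \<tau>2 x then u x * g t else 0))"
        unfolding \<mu>_def sum_distrib_right by (rule sum.cong[OF refl], rule sum.cong[OF refl]) auto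
      also have "\<dots> = (\<Sum>x\<in>P. \<Sum>t\<le>Kh. (if t = \<tau>2 x then u x * g t else 0))" by (rule sum.swap)
      also have "\<dots> = (\<Sum>x\<in>P. u x * g (\<tau>2 x))"
        by (rule sum.cong[OF refl]) (use t2K in \<open>simp add: sum.delta'\<close>)
      finally show ?thesis .
    qed
    have a0: "0 \<le> a" unfolding a_def using u0 by (intro sum_nonneg) auto
    have a1: "a \<le> 1"
    proof -
      have "a \<le> (\<Sum>x\<in>P. u x)" unfolding a_def
      proof (rule sum_mono)
        fix x assume x: "x \<in> P"
        have "real (\<tau>1 x) / real Kh \<le> 1" using t1K[OF x] Kh1 by simp
        then show "u x * real (\<tau>1 x) / real Kh \<le> u x" using u0 x
          by (metis mult_left_le times_divide_eq_right)
      qed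
      then show ?thesis using u1 by simp
    qed
    have mu0: "0 \<le> \<mu> t" for t unfolding \<mu>_def using u0 by (intro sum_nonneg) auto
    have mu1: "(\<Sum>t\<le>Kh. \<mu> t) = 1" using key[of "\<lambda>_. 1"] u1 by simp
    have fstp: "fst p = (\<Sum>x\<in>P. u x * Mt (\<tau>1 x) (\<tau>2 x))"
    proof -
      have "fst p = (\<Sum>x\<in>P. u x * fst x)" using up[symmetric] by (simp add: fst_sum)
      also have "\<dots> = (\<Sum>x\<in>P. u x * Mt (\<tau>1 x) (\<tau>2 x))"
        by (rule sum.cong[OF refl]) (subst xeq, simp_all)
      finally show ?thesis .
    qed
    have r1p: "fst (snd p) = (\<Sum>x\<in>P. u x * R1t (\<tau>2 x))"
    proof -
      have "fst (snd p) = (\<Sum>x\<in>P. u x * fst (snd x))" using up[symmetric] by (simp add: fst_sum snd_sum)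
      also have "\<dots> = (\<Sum>x\<in>P. u x * R1t (\<tau>2 x))"
        by (rule sum.cong[OF refl]) (subst xeq, simp_all)
      finally show ?thesis .
    qed
    have r2p: "snd (snd p) = (\<Sum>x\<in>P. u x * R2t (\<tau>1 x) (\<tau>2 x))"
    proof -
      have "snd (snd p) = (\<Sum>x\<in>P. u x * snd (snd x))" using up[symmetric] by (simp add: snd_sum)
      also have "\<dots> = (\<Sum>x\<in>P. u x * R2t (\<tau>1 x) (\<tau>2 x))"
        by (rule sum.cong[OF refl]) (subst xeq, simp_all)
      finally show ?thesis .
    qed
    have eM: "fst p = a * N * real r + (real D - N * real r) * (\<Sum>t\<le>Kh. \<mu> t * real t / real Kh)"
    proof -
      have "fst p = (\<Sum>x\<in>P. N * real r * (u x * real (\<tau>1 x) / real Kh) + (real D - N * real r) * (u x * (real (\<tau>2 x) / real Kh)))"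
        unfolding fstp by (rule sum.cong[OF refl]) (simp add: Mt_def add_divide_distrib diff_divide_distrib algebra_simps)
      also have "\<dots> = N * real r * a + (real D - N * real r) * (\<Sum>x\<in>P. u x * (real (\<tau>2 x) / real Kh))"
        by (simp add: sum.distrib sum_distrib_left a_def)
      also have "(\<Sum>x\<in>P. u x * (real (\<tau>2 x) / real Kh)) = (\<Sum>t\<le>Kh. \<mu> t * (real t / real Kh))"
        using key[of "\<lambda>t. real t / real Kh"] by simp
      finally show ?thesis by (simp add: algebra_simps)
    qed
    have eR1: "fst (snd p) = (1 - N * real r / real D) / real r * (\<Sum>t\<le>Kh. \<mu> t * (real Kh - real t) / (real t + 1))"
    proof -
      have "fst (snd p) = (\<Sum>x\<in>P. (1 - N * real r / real D) / real r * (u x * ((real Kh - real (\<tau>2 x)) / (real (\<tau>2 x) + 1))))"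
    proof -
      have R1e: "R1t t = (1 - N * real r / real D) / real r * ((real Kh - real t) / (real t + 1))" for t
        unfolding R1t_def using r1 by (simp add: field_simps)
      show ?thesis unfolding r1p R1e by (rule sum.cong[OF refl]) (simp only: mult.left_commute)
    qed
      also have "\<dots> = (1 - N * real r / real D) / real r * (\<Sum>x\<in>P. u x * ((real Kh - real (\<tau>2 x)) / (real (\<tau>2 x) + 1)))"
        by (simp add: sum_distrib_left)
      also have "(\<Sum>x\<in>P. u x * ((real Kh - real (\<tau>2 x)) / (real (\<tau>2 x) + 1))) = (\<Sum>t\<le>Kh. \<mu> t * ((real Kh - real t) / (real t + 1)))"
        using key[of "\<lambda>t. (real Kh - real t) / (real t + 1)"] by simp
      finally show ?thesis by (simp add: algebra_simps)
    qed
    have eR2: "snd (snd p) = (1 - fst p / real D) / real r"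
    proof -
      have "snd (snd p) = (\<Sum>x\<in>P. 1 / real r * u x - 1 / real r / real D * (u x * Mt (\<tau>1 x) (\<tau>2 x)))"
        unfolding r2p by (rule sum.cong[OF refl]) (simp add: R2t_def algebra_simps)
      also have "\<dots> = 1 / real r * (\<Sum>x\<in>P. u x) - 1 / real r / real D * fst p"
        by (simp add: sum_subtractf sum_distrib_left fstp)
      finally show ?thesis using u1 r1 D1 by (simp add: field_simps)
    qed
    have c: "achievable h r D
     (a * N * real r + (real D - N * real r) * (\<Sum>t\<le>Kh. \<mu> t * real t / real Kh)) N
     ((1 - N * real r / real D) / real r * (\<Sum>t\<le>Kh. \<mu> t * (real Kh - real t) / (real t + 1)) + \<delta>)
     ((1 - (a * N * real r + (real D - N * real r) * (\<Sum>t\<le>Kh. \<mu> t * real t / real Kh)) / real D) / real r + \<delta>)"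
      using core[OF r1 rh D1 N0 ND a0 a1 mu0 mu1[unfolded Kh_def] dl] unfolding Kh_def .
    show "achievable h r D (fst p) N (fst (snd p) + \<delta>) (snd (snd p) + \<delta>)"
      using c unfolding eR2 eR1 eM[symmetric] .
  qed
  show ?thesis
  proof (rule conjI)
    show "\<forall>t1 t2. t1 \<le> min Kh (nat \<lfloor>real Kh * N / real D\<rfloor>) \<and> t2 \<le> Kh \<longrightarrow>
            (\<forall>\<delta>>0. achievable h r D (Mt t1 t2) N (R1t t2 + \<delta>) (R2t t1 t2 + \<delta>))"
    proof (intro allI impI)
      fix t1 t2 :: nat and \<delta> :: real
      assume t: "t1 \<le> min Kh (nat \<lfloor>real Kh * N / real D\<rfloor>) \<and> t2 \<le> Kh" and dl: "\<delta> > 0"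
      have "(Mt t1 t2, R1t t2, R2t t1 t2) \<in> P" using t unfolding P_def by blast
      then have "(Mt t1 t2, R1t t2, R2t t1 t2) \<in> convex hull P" by (rule hull_inc)
      then show "achievable h r D (Mt t1 t2) N (R1t t2 + \<delta>) (R2t t1 t2 + \<delta>)"
        using hullres dl by fastforce
    qed
  next
    show "\<forall>p \<in> convex hull P. \<forall>\<delta>>0. achievable h r D (fst p) N (fst (snd p) + \<delta>) (snd (snd p) + \<delta>)"
      by (rule hullres)
  qed
qed


end
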